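(* The three linear orders $I_{even}$, $I_{odd}$ and $I$ are pairwise non-isomorphic.
   Context: Ordinal exponents have their usual ordinal meaning, with $\omega^\omega=\sup_{n<\omega}\omega^n$; $kZ$ denotes $k$ consecutive copies of the order $Z$. The $\omega^*$-sum $\cdots+M_2+M_1$ has $M_{k+1}$ entirely to the left of $M_k$. For $n\ge 0$ let $L_n=\cdots+3\omega^{n+3}+2\omega^{n+2}+\omega^{n+1}+\omega^\omega$ (the $\omega^*$-sum whose $k$-th summand from the right, $k\ge1$, is $k\,\omega^{n+k}$, followed by $\omega^\omega$), and for $n\ge1$ let $L_{-n}=\cdots+(n+3)\omega^{3}+(n+2)\omega^{2}+(n+1)\omega+\omega^\omega$ (the $\omega^*$-sum whose $k$-th summand from the right is $(n+k)\omega^k$, followed by $\omega^\omega$). For orders $M_i$ ($i\in\mathbb{Z}$), $\cdots+M_{-1}+M_0+M_1+\cdots$ denotes the $\mathbb{Z}$-indexed ordered sum. Define \[ I_{even}=\cdots+L_{-2}+L_0+L_2+\cdots,\quad I_{odd}=\cdots+L_{-1}+L_1+L_3+\cdots,\quad I=\cdots+L_{-1}+L_0+L_1+\cdots, \] the $\mathbb{Z}$-sums of the $L_i$ over even $i$, odd $i$, and all $i$ respectively, in increasing order of index. *)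

theory Defs
  imports Main
begin

text \<open>Linear orders are represented as reflexive relations (non-strict orders);
  the underlying set of an order r is Field r.\<close>

definition ord_iso :: "'a rel \<Rightarrow> 'b rel \<Rightarrow> bool" where
  "ord_iso r s \<longleftrightarrow> (\<exists>f. bij_betw f (Field r) (Field s) \<and>
      (\<forall>x\<in>Field r. \<forall>y\<in>Field r. (x, y) \<in> r \<longleftrightarrow> (f x, f y) \<in> s))"

definition osum :: "'i rel \<Rightarrow> ('i \<Rightarrow> 'a rel) \<Rightarrow> ('i \<times> 'a) rel" where
  "osum R M = {((i, x), (j, y)). i \<in> Field R \<and> j \<in> Field R \<and>
      x \<in> Field (M i) \<and> y \<in> Field (M j) \<and>
      ((i \<noteq> j \<and> (i, j) \<in> R) \<or> (i = j \<and> (x, y) \<in> M i))}"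

definition oplus :: "'a rel \<Rightarrow> 'b rel \<Rightarrow> ('a + 'b) rel" where
  "oplus r s = {(Inl x, Inl y) | x y. (x, y) \<in> r} \<union> {(Inr x, Inr y) | x y. (x, y) \<in> s}
     \<union> {(Inl x, Inr y) | x y. x \<in> Field r \<and> y \<in> Field s}"

definition fin_ord :: "nat \<Rightarrow> nat rel" where
  "fin_ord k = {(i, j). i \<le> j \<and> j < k}"

text \<open>The index order of an omega*-sum with summands indexed by k \<ge> 1,
  the (k+1)-th summand lying to the left of the k-th.\<close>
definition omega_star_pos :: "nat rel" where
  "omega_star_pos = {(i, j). 1 \<le> j \<and> j \<le> i}"

text \<open>The ordinal omega^m: lists of naturals of length m (Cantor normal form
  digits, most significant first), ordered lexicographically.\<close>
definition omega_pow :: "nat \<Rightarrow> nat list rel" where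
  "omega_pow m = {(xs, ys). length xs = m \<and> length ys = m \<and>
      (xs = ys \<or> (xs, ys) \<in> lenlex {(a, b). a < b})}"

text \<open>The ordinal omega^omega = sup of omega^n: finite digit lists (most significant
  first) without leading zero, ordered by length and then lexicographically.
  (omega^n embeds as an initial segment by prefixing a zero digit.)\<close>
definition omega_omega :: "nat list rel" where
  "omega_omega = {(xs, ys). (xs = [] \<or> hd xs \<noteq> 0) \<and> (ys = [] \<or> hd ys \<noteq> 0) \<and>
      (xs = ys \<or> (xs, ys) \<in> lenlex {(a, b). a < b})}"

definition copies_omega_pow :: "nat \<Rightarrow> nat \<Rightarrow> (nat \<times> nat list) rel" where
  "copies_omega_pow k m = osum (fin_ord k) (\<lambda>_. omega_pow m)"

text \<open>Lgen a b = ... + (a+3) omega^(b+3) + (a+2) omega^(b+2) + (a+1) omega^(b+1) + omega^omega.\<close>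
definition Lgen :: "nat \<Rightarrow> nat \<Rightarrow> ((nat \<times> (nat \<times> nat list)) + nat list) rel" where
  "Lgen a b = oplus (osum omega_star_pos (\<lambda>k. copies_omega_pow (a + k) (b + k))) omega_omega"

text \<open>L_n for n \<ge> 0 has k-th summand k omega^(n+k); L_{-n} has k-th summand (n+k) omega^k.\<close>
definition L :: "int \<Rightarrow> ((nat \<times> (nat \<times> nat list)) + nat list) rel" where
  "L i = (if 0 \<le> i then Lgen 0 (nat i) else Lgen (nat (- i)) 0)"

definition I_even :: "(int \<times> ((nat \<times> (nat \<times> nat list)) + nat list)) rel" where
  "I_even = osum {(i, j). even i \<and> even j \<and> i \<le> j} L"

definition I_odd :: "(int \<times> ((nat \<times> (nat \<times> nat list)) + nat list)) rel" where
  "I_odd = osum {(i, j). odd i \<and> odd j \<and> i \<le> j} L"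

definition I_all :: "(int \<times> ((nat \<times> (nat \<times> nat list)) + nat list)) rel" where
  "I_all = osum {(i, j). i \<le> j} L"

end

theory Submission
  imports Defs
begin


definition lt :: "'a rel \<Rightarrow> 'a \<Rightarrow> 'a \<Rightarrow> bool" where
  "lt r x y \<longleftrightarrow> (x, y) \<in> r \<and> x \<noteq> y"

fun Dg :: "'a rel \<Rightarrow> nat \<Rightarrow> 'a set" where
  "Dg r 0 = Field r"
| "Dg r (Suc e) = {x \<in> Field r. \<forall>y. lt r y x \<longrightarrow> (\<exists>z. lt r y z \<and> lt r z x \<and> z \<in> Dg r e)}"

lemma Dg_Field: "Dg r e \<subseteq> Field r"
  by (cases e) auto

lemma Dg_SucD: "x \<in> Dg r (Suc e) \<Longrightarrow> lt r y x \<Longrightarrow> \<exists>z. lt r y z \<and> lt r z x \<and> z \<in> Dg r e"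
  by auto

lemma Dg_SucI: "x \<in> Field r \<Longrightarrow> (\<And>y. lt r y x \<Longrightarrow> \<exists>z. lt r y z \<and> lt r z x \<and> z \<in> Dg r e) \<Longrightarrow> x \<in> Dg r (Suc e)"
  by auto

declare Dg.simps(2)[simp del]

lemma lt_Field: "lt r x y \<Longrightarrow> x \<in> Field r \<and> y \<in> Field r"
  by (auto simp: lt_def intro: FieldI1 FieldI2)

lemma Dg_iso:
  assumes bij: "bij_betw f (Field r) (Field s)"
    and ord: "\<forall>x\<in>Field r. \<forall>y\<in>Field r. (x, y) \<in> r \<longleftrightarrow> (f x, f y) \<in> s"
  shows "x \<in> Field r \<Longrightarrow> x \<in> Dg r e \<longleftrightarrow> f x \<in> Dg s e"
proof (induction e arbitrary: x)
  case 0
  then show ?case using bij by (auto simp: bij_betw_def)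
next
  case (Suc e)
  have ltiff: "lt r a b \<longleftrightarrow> lt s (f a) (f b)" if "a \<in> Field r" "b \<in> Field r" for a b
    using that ord bij unfolding lt_def bij_betw_def inj_on_def by metis
  have fx: "f x \<in> Field s" using Suc.prems bij by (auto simp: bij_betw_def)
  show ?case
  proof
    assume A: "x \<in> Dg r (Suc e)"
    show "f x \<in> Dg s (Suc e)"
    proof (rule Dg_SucI[OF fx])
      fix y' assume "lt s y' (f x)"
      then have "y' \<in> Field s" using lt_Field by metis
      then obtain y where y: "y \<in> Field r" "y' = f y" using bij by (auto simp: bij_betw_def)
      have "lt r y x" using ltiff[OF y(1) Suc.prems] \<open>lt s y' (f x)\<close> y by simp
      then obtain z where z: "lt r y z" "lt r z x" "z \<in> Dg r e" using Dg_SucD[OF A] by blast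
      have zF: "z \<in> Field r" using z lt_Field by metis
      show "\<exists>z. lt s y' z \<and> lt s z (f x) \<and> z \<in> Dg s e"
        using z zF y ltiff Suc.IH Suc.prems by (intro exI[of _ "f z"]) auto
    qed
  next
    assume A: "f x \<in> Dg s (Suc e)"
    show "x \<in> Dg r (Suc e)"
    proof (rule Dg_SucI[OF Suc.prems])
      fix y assume ly: "lt r y x"
      then have yF: "y \<in> Field r" using lt_Field by metis
      have "lt s (f y) (f x)" using ltiff[OF yF Suc.prems] ly by simp
      then obtain z' where z: "lt s (f y) z'" "lt s z' (f x)" "z' \<in> Dg s e" using Dg_SucD[OF A] by blast
      have "z' \<in> Field s" using z lt_Field by metis
      then obtain z where zz: "z \<in> Field r" "z' = f z" using bij by (auto simp: bij_betw_def)
      show "\<exists>z. lt r y z \<and> lt r z x \<and> z \<in> Dg r e"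
        using z zz yF ltiff Suc.IH Suc.prems by (intro exI[of _ z]) auto
    qed
  qed
qed

lemma Dg_down:
  assumes tr: "trans r" and ts: "trans s"
    and bij: "bij_betw h {u. (u, w) \<in> r} {u. (u, h w) \<in> s}"
    and ord: "\<forall>x\<in>{u. (u, w) \<in> r}. \<forall>y\<in>{u. (u, w) \<in> r}. (x, y) \<in> r \<longleftrightarrow> (h x, h y) \<in> s"
  shows "(u, w) \<in> r \<Longrightarrow> u \<in> Dg r e \<longleftrightarrow> h u \<in> Dg s e"
proof (induction e arbitrary: u)
  case 0
  have "(h u, h w) \<in> s" using 0 bij by (auto simp: bij_betw_def)
  then show ?case using 0 by (auto intro: FieldI1)
next
  case (Suc e)
  have inj: "inj_on h {u. (u, w) \<in> r}" using bij by (simp add: bij_betw_def)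
  have ltiff: "lt r a b \<longleftrightarrow> lt s (h a) (h b)" if "(a, w) \<in> r" "(b, w) \<in> r" for a b
  proof -
    have "(a, b) \<in> r \<longleftrightarrow> (h a, h b) \<in> s" using ord that by blast
    moreover have "a \<noteq> b \<longleftrightarrow> h a \<noteq> h b" using inj that unfolding inj_on_def by blast
    ultimately show ?thesis by (simp add: lt_def)
  qed
  have hu: "(h u, h w) \<in> s" using Suc.prems bij by (auto simp: bij_betw_def)
  have uF: "u \<in> Field r" using Suc.prems by (auto intro: FieldI1)
  have huF: "h u \<in> Field s" using hu by (auto intro: FieldI1)
  have down: "(y, w) \<in> r" if "lt r y u" for y
    using that Suc.prems tr unfolding lt_def trans_def by blast
  have down': "(y', h w) \<in> s" if "lt s y' (h u)" for y'
    using that hu ts unfolding lt_def trans_def by blast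
  show ?case
  proof
    assume A: "u \<in> Dg r (Suc e)"
    show "h u \<in> Dg s (Suc e)"
    proof (rule Dg_SucI[OF huF])
      fix y' assume ly: "lt s y' (h u)"
      then have "(y', h w) \<in> s" by (rule down')
      then obtain y where y: "(y, w) \<in> r" "y' = h y" using bij by (auto simp: bij_betw_def)
      have "lt r y u" using ltiff[OF y(1) Suc.prems] ly y by simp
      then obtain z where z: "lt r y z" "lt r z u" "z \<in> Dg r e" using Dg_SucD[OF A] by blast
      have zw: "(z, w) \<in> r" using z(2) by (rule down)
      have "lt s y' (h z)" using ltiff[OF y(1) zw] z(1) y(2) by simp
      moreover have "lt s (h z) (h u)" using ltiff[OF zw Suc.prems] z(2) by simp
      moreover have "h z \<in> Dg s e" using Suc.IH[OF zw] z(3) by simp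
      ultimately show "\<exists>z. lt s y' z \<and> lt s z (h u) \<and> z \<in> Dg s e" by blast
    qed
  next
    assume A: "h u \<in> Dg s (Suc e)"
    show "u \<in> Dg r (Suc e)"
    proof (rule Dg_SucI[OF uF])
      fix y assume ly: "lt r y u"
      then have yw: "(y, w) \<in> r" by (rule down)
      have "lt s (h y) (h u)" using ltiff[OF yw Suc.prems] ly by simp
      then obtain z' where z: "lt s (h y) z'" "lt s z' (h u)" "z' \<in> Dg s e" using Dg_SucD[OF A] by blast
      have "(z', h w) \<in> s" using z(2) by (rule down')
      then obtain z where zz: "(z, w) \<in> r" "z' = h z" using bij by (auto simp: bij_betw_def)
      have "lt r y z" using ltiff[OF yw zz(1)] z(1) zz(2) by simp
      moreover have "lt r z u" using ltiff[OF zz(1) Suc.prems] z(2) zz(2) by simp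
      moreover have "z \<in> Dg r e" using Suc.IH[OF zz(1)] z(3) zz(2) by simp
      ultimately show "\<exists>z. lt r y z \<and> lt r z u \<and> z \<in> Dg r e" by blast
    qed
  qed
qed

lemma Dg_imm_pred: "lt r y x \<Longrightarrow> \<forall>z. \<not> (lt r y z \<and> lt r z x) \<Longrightarrow> x \<notin> Dg r (Suc e)"
  by (meson Dg_SucD)

section \<open>ordered sums\<close>

lemma in_osum: "((i, x), (j, y)) \<in> osum R M \<longleftrightarrow> i \<in> Field R \<and> j \<in> Field R \<and>
      x \<in> Field (M i) \<and> y \<in> Field (M j) \<and>
      ((i \<noteq> j \<and> (i, j) \<in> R) \<or> (i = j \<and> (x, y) \<in> M i))"
  by (simp add: osum_def)

lemma lt_osum: "lt (osum R M) (i, x) (j, y) \<longleftrightarrow> i \<in> Field R \<and> j \<in> Field R \<and>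
      x \<in> Field (M i) \<and> y \<in> Field (M j) \<and>
      ((i \<noteq> j \<and> (i, j) \<in> R) \<or> (i = j \<and> lt (M i) x y))"
  by (auto simp: lt_def osum_def)

lemma Field_osum: "Field (osum R M) = {(i, x). i \<in> Field R \<and> x \<in> Field (M i)}"
proof
  show "Field (osum R M) \<subseteq> {(i, x). i \<in> Field R \<and> x \<in> Field (M i)}"
    by (auto simp: Field_def osum_def)
next
  show "{(i, x). i \<in> Field R \<and> x \<in> Field (M i)} \<subseteq> Field (osum R M)"
  proof clarify
    fix i x assume a: "i \<in> Field R" "x \<in> Field (M i)"
    then obtain y where "(x, y) \<in> M i \<or> (y, x) \<in> M i" by (auto simp: Field_def)
    then have "((i, x), (i, y)) \<in> osum R M \<or> ((i, y), (i, x)) \<in> osum R M"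
      using a by (auto simp: osum_def intro: FieldI1 FieldI2)
    then show "(i, x) \<in> Field (osum R M)" by (auto intro: FieldI1 FieldI2)
  qed
qed

lemma Dg_osum_nonmin:
  assumes anti: "\<forall>i j. (i, j) \<in> R \<longrightarrow> (j, i) \<in> R \<longrightarrow> i = j"
  shows "i \<in> Field R \<Longrightarrow> lt (M i) x0 x \<Longrightarrow> (i, x) \<in> Dg (osum R M) e \<longleftrightarrow> x \<in> Dg (M i) e"
proof (induction e arbitrary: x0 x)
  case 0
  then show ?case using lt_Field[OF 0(2)] by (simp add: Field_osum)
next
  case (Suc e)
  have xF: "x \<in> Field (M i)" "x0 \<in> Field (M i)" using lt_Field[OF Suc.prems(2)] by auto
  have ixF: "(i, x) \<in> Field (osum R M)" using xF Suc.prems by (simp add: Field_osum)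
  show ?case
  proof
    assume A: "(i, x) \<in> Dg (osum R M) (Suc e)"
    show "x \<in> Dg (M i) (Suc e)"
    proof (rule Dg_SucI[OF xF(1)])
      fix y assume ly: "lt (M i) y x"
      have "lt (osum R M) (i, y) (i, x)" using ly Suc.prems lt_Field[OF ly] by (simp add: lt_osum)
      then obtain z' where z: "lt (osum R M) (i, y) z'" "lt (osum R M) z' (i, x)" "z' \<in> Dg (osum R M) e"
        using Dg_SucD[OF A] by blast
      obtain l z where lz: "z' = (l, z)" by (cases z')
      have "l = i" using z lz anti by (auto simp: lt_osum)
      then have "lt (M i) y z" "lt (M i) z x" using z lz by (auto simp: lt_osum)
      then show "\<exists>z. lt (M i) y z \<and> lt (M i) z x \<and> z \<in> Dg (M i) e"
        using Suc.IH[of y z] Suc.prems z lz \<open>l = i\<close> by auto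
    qed
  next
    assume A: "x \<in> Dg (M i) (Suc e)"
    show "(i, x) \<in> Dg (osum R M) (Suc e)"
    proof (rule Dg_SucI[OF ixF])
      fix y' assume ly: "lt (osum R M) y' (i, x)"
      obtain l y where ly': "y' = (l, y)" by (cases y')
      show "\<exists>z. lt (osum R M) y' z \<and> lt (osum R M) z (i, x) \<and> z \<in> Dg (osum R M) e"
      proof (cases "l = i")
        case True
        then have "lt (M i) y x" using ly ly' by (simp add: lt_osum)
        then obtain z where z: "lt (M i) y z" "lt (M i) z x" "z \<in> Dg (M i) e" using Dg_SucD[OF A] by blast
        show ?thesis using z Suc.IH[of y z] Suc.prems True ly' lt_Field[OF z(1)] xF
          by (intro exI[of _ "(i, z)"]) (auto simp: lt_osum)
      next
        case False
        obtain z where z: "lt (M i) x0 z" "lt (M i) z x" "z \<in> Dg (M i) e" using Dg_SucD[OF A] Suc.prems by blast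
        show ?thesis using z Suc.IH[of x0 z] Suc.prems False ly ly' lt_Field[OF z(1)]
          by (intro exI[of _ "(i, z)"]) (auto simp: lt_osum)
      qed
    qed
  qed
qed

definition cof :: "'a rel \<Rightarrow> 'a set \<Rightarrow> bool" where
  "cof r S \<longleftrightarrow> (\<forall>w\<in>Field r. \<exists>z. lt r w z \<and> z \<in> S)"

lemma Dg_osum_min:
  assumes anti: "\<forall>i j. (i, j) \<in> R \<longrightarrow> (j, i) \<in> R \<longrightarrow> i = j"
    and tot: "\<forall>i\<in>Field R. \<forall>j\<in>Field R. (i, j) \<in> R \<or> (j, i) \<in> R"
    and iF: "i \<in> Field R" and ii: "(i', i) \<in> R" "i' \<noteq> i"
    and imm: "\<forall>l. (i', l) \<in> R \<longrightarrow> (l, i) \<in> R \<longrightarrow> l = i' \<or> l = i"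
    and xF: "x \<in> Field (M i)" and xmin: "\<forall>y. \<not> lt (M i) y x"
    and ne: "Field (M i') \<noteq> {}"
  shows "(i, x) \<in> Dg (osum R M) (Suc e) \<longleftrightarrow> cof (M i') (Dg (M i') e)"
proof -
  have i'F: "i' \<in> Field R" using ii by (auto intro: FieldI1)
  have ixF: "(i, x) \<in> Field (osum R M)" using xF iF by (simp add: Field_osum)
  show ?thesis
  proof
    assume A: "(i, x) \<in> Dg (osum R M) (Suc e)"
    show "cof (M i') (Dg (M i') e)"
      unfolding cof_def
    proof
      fix w assume wF: "w \<in> Field (M i')"
      have "lt (osum R M) (i', w) (i, x)" using wF xF iF i'F ii by (simp add: lt_osum)
      then obtain z' where z: "lt (osum R M) (i', w) z'" "lt (osum R M) z' (i, x)" "z' \<in> Dg (osum R M) e"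
        using Dg_SucD[OF A] by blast
      obtain l z where lz: "z' = (l, z)" by (cases z')
      have "l \<noteq> i" using z(2) lz xmin by (auto simp: lt_osum)
      then have "l = i'" using z lz imm by (auto simp: lt_osum)
      then have "lt (M i') w z" using z lz by (auto simp: lt_osum)
      then show "\<exists>z. lt (M i') w z \<and> z \<in> Dg (M i') e"
        using Dg_osum_nonmin[OF anti i'F, of M w z e] z lz \<open>l = i'\<close> by auto
    qed
  next
    assume C: "cof (M i') (Dg (M i') e)"
    show "(i, x) \<in> Dg (osum R M) (Suc e)"
    proof (rule Dg_SucI[OF ixF])
      fix y' assume ly: "lt (osum R M) y' (i, x)"
      obtain l y where ly': "y' = (l, y)" by (cases y')
      have li: "l \<noteq> i" "(l, i) \<in> R" "l \<in> Field R" "y \<in> Field (M l)"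
        using ly ly' xmin by (auto simp: lt_osum)
      show "\<exists>z. lt (osum R M) y' z \<and> lt (osum R M) z (i, x) \<and> z \<in> Dg (osum R M) e"
      proof (cases "l = i'")
        case True
        then obtain z where z: "lt (M i') y z" "z \<in> Dg (M i') e" using C li unfolding cof_def by auto
        show ?thesis using z True li ly' lt_Field[OF z(1)] xF iF i'F ii
            Dg_osum_nonmin[OF anti i'F, of M y z e]
          by (intro exI[of _ "(i', z)"]) (auto simp: lt_osum)
      next
        case False
        have "(l, i') \<in> R" using tot li i'F imm False by blast
        obtain w where wF: "w \<in> Field (M i')" using ne by auto
        then obtain z where z: "lt (M i') w z" "z \<in> Dg (M i') e" using C unfolding cof_def by auto
        show ?thesis using z False li ly' lt_Field[OF z(1)] xF iF i'F ii \<open>(l, i') \<in> R\<close>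
            Dg_osum_nonmin[OF anti i'F, of M w z e]
          by (intro exI[of _ "(i', z)"]) (auto simp: lt_osum)
      qed
    qed
  qed
qed

lemma cof_osum_max:
  assumes anti: "\<forall>i j. (i, j) \<in> R \<longrightarrow> (j, i) \<in> R \<longrightarrow> i = j"
    and jF: "j \<in> Field R" and jmax: "\<forall>i\<in>Field R. (i, j) \<in> R"
    and ne: "Field (M j) \<noteq> {}"
  shows "cof (osum R M) (Dg (osum R M) e) \<longleftrightarrow> cof (M j) (Dg (M j) e)"
proof
  assume C: "cof (osum R M) (Dg (osum R M) e)"
  show "cof (M j) (Dg (M j) e)" unfolding cof_def
  proof
    fix w assume wF: "w \<in> Field (M j)"
    then have "(j, w) \<in> Field (osum R M)" using jF by (simp add: Field_osum)
    then obtain z' where z: "lt (osum R M) (j, w) z'" "z' \<in> Dg (osum R M) e" using C unfolding cof_def by auto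
    obtain l z where lz: "z' = (l, z)" by (cases z')
    have "l = j" using z lz anti jmax by (auto simp: lt_osum)
    then have "lt (M j) w z" using z lz by (simp add: lt_osum)
    then show "\<exists>z. lt (M j) w z \<and> z \<in> Dg (M j) e"
      using Dg_osum_nonmin[OF anti jF, of M w z e] z lz \<open>l = j\<close> by auto
  qed
next
  assume C: "cof (M j) (Dg (M j) e)"
  show "cof (osum R M) (Dg (osum R M) e)" unfolding cof_def
  proof
    fix w' assume "w' \<in> Field (osum R M)"
    then obtain i x where w': "w' = (i, x)" "i \<in> Field R" "x \<in> Field (M i)" by (auto simp: Field_osum)
    show "\<exists>z. lt (osum R M) w' z \<and> z \<in> Dg (osum R M) e"
    proof (cases "i = j")
      case True
      then obtain z where z: "lt (M j) x z" "z \<in> Dg (M j) e" using C w' unfolding cof_def by auto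
      then show ?thesis using w' True lt_Field[OF z(1)] Dg_osum_nonmin[OF anti jF, of M x z e]
        by (intro exI[of _ "(j, z)"]) (auto simp: lt_osum)
    next
      case False
      obtain x0 where x0: "x0 \<in> Field (M j)" using ne by auto
      then obtain z where z: "lt (M j) x0 z" "z \<in> Dg (M j) e" using C unfolding cof_def by auto
      then show ?thesis using w' False lt_Field[OF z(1)] Dg_osum_nonmin[OF anti jF, of M x0 z e] jmax jF
        by (intro exI[of _ "(j, z)"]) (auto simp: lt_osum)
    qed
  qed
qed

section \<open>binary sums\<close>

lemma in_oplus [simp]:
  "(Inl x, Inl y) \<in> oplus r s \<longleftrightarrow> (x, y) \<in> r"
  "(Inr u, Inr v) \<in> oplus r s \<longleftrightarrow> (u, v) \<in> s"
  "(Inl x, Inr v) \<in> oplus r s \<longleftrightarrow> x \<in> Field r \<and> v \<in> Field s"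
  "(Inr u, Inl y) \<notin> oplus r s"
  by (auto simp: oplus_def)

lemma lt_oplus [simp]:
  "lt (oplus r s) (Inl x) (Inl y) \<longleftrightarrow> lt r x y"
  "lt (oplus r s) (Inr u) (Inr v) \<longleftrightarrow> lt s u v"
  "lt (oplus r s) (Inl x) (Inr v) \<longleftrightarrow> x \<in> Field r \<and> v \<in> Field s"
  "\<not> lt (oplus r s) (Inr u) (Inl y)"
  by (auto simp: lt_def)

lemma Field_oplus: "Field (oplus r s) = Inl ` Field r \<union> Inr ` Field s"
proof
  show "Field (oplus r s) \<subseteq> Inl ` Field r \<union> Inr ` Field s"
    by (auto simp: Field_def oplus_def)
  show "Inl ` Field r \<union> Inr ` Field s \<subseteq> Field (oplus r s)"
  proof
    fix z assume "z \<in> Inl ` Field r \<union> Inr ` Field s"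
    then show "z \<in> Field (oplus r s)"
    proof
      assume "z \<in> Inl ` Field r"
      then obtain x y where "z = Inl x" "(x, y) \<in> r \<or> (y, x) \<in> r" by (auto simp: Field_def)
      then have "(z, Inl y) \<in> oplus r s \<or> (Inl y, z) \<in> oplus r s" by simp
      then show ?thesis by (meson FieldI1 FieldI2)
    next
      assume "z \<in> Inr ` Field s"
      then obtain x y where "z = Inr x" "(x, y) \<in> s \<or> (y, x) \<in> s" by (auto simp: Field_def)
      then have "(z, Inr y) \<in> oplus r s \<or> (Inr y, z) \<in> oplus r s" by simp
      then show ?thesis by (meson FieldI1 FieldI2)
    qed
  qed
qed

lemma Inl_Field_oplus [simp]: "Inl x \<in> Field (oplus r s) \<longleftrightarrow> x \<in> Field r"
  and Inr_Field_oplus [simp]: "Inr y \<in> Field (oplus r s) \<longleftrightarrow> y \<in> Field s"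
  by (auto simp: Field_oplus)

lemma Dg_oplus_left: "x \<in> Field r \<Longrightarrow> Inl x \<in> Dg (oplus r s) e \<longleftrightarrow> x \<in> Dg r e"
proof (induction e arbitrary: x)
  case 0 then show ?case by simp
next
  case (Suc e)
  have ex: "(\<exists>z'. lt (oplus r s) (Inl y) z' \<and> lt (oplus r s) z' (Inl x) \<and> z' \<in> Dg (oplus r s) e)
     \<longleftrightarrow> (\<exists>z. lt r y z \<and> lt r z x \<and> z \<in> Dg r e)" for y
  proof
    assume "\<exists>z'. lt (oplus r s) (Inl y) z' \<and> lt (oplus r s) z' (Inl x) \<and> z' \<in> Dg (oplus r s) e"
    then obtain z' where z: "lt (oplus r s) (Inl y) z'" "lt (oplus r s) z' (Inl x)" "z' \<in> Dg (oplus r s) e" by blast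
    then obtain z where "z' = Inl z" by (cases z') auto
    then show "\<exists>z. lt r y z \<and> lt r z x \<and> z \<in> Dg r e" using z Suc.IH lt_Field by fastforce
  next
    assume "\<exists>z. lt r y z \<and> lt r z x \<and> z \<in> Dg r e"
    then obtain z where z: "lt r y z" "lt r z x" "z \<in> Dg r e" by blast
    then show "\<exists>z'. lt (oplus r s) (Inl y) z' \<and> lt (oplus r s) z' (Inl x) \<and> z' \<in> Dg (oplus r s) e"
      using Suc.IH lt_Field by (intro exI[of _ "Inl z"]) fastforce
  qed
  have all: "(\<forall>y'. lt (oplus r s) y' (Inl x) \<longrightarrow> P y') \<longleftrightarrow> (\<forall>y. lt r y x \<longrightarrow> P (Inl y))" for P
  proof
    assume "\<forall>y'. lt (oplus r s) y' (Inl x) \<longrightarrow> P y'" then show "\<forall>y. lt r y x \<longrightarrow> P (Inl y)" by simp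
  next
    assume a: "\<forall>y. lt r y x \<longrightarrow> P (Inl y)"
    show "\<forall>y'. lt (oplus r s) y' (Inl x) \<longrightarrow> P y'"
    proof (intro allI impI)
      fix y' assume "lt (oplus r s) y' (Inl x)" then show "P y'" using a by (cases y') auto
    qed
  qed
  show ?case using Suc.prems by (simp only: Dg.simps mem_Collect_eq Inl_Field_oplus all ex)
qed

lemma Dg_oplus_right:
  assumes "lt s y0 y"
  shows "Inr y \<in> Dg (oplus r s) e \<longleftrightarrow> y \<in> Dg s e"
  using assms
proof (induction e arbitrary: y0 y)
  case 0 then show ?case using lt_Field by fastforce
next
  case (Suc e)
  have yF: "y \<in> Field s" using lt_Field[OF Suc.prems] by simp
  show ?case
  proof
    assume A: "Inr y \<in> Dg (oplus r s) (Suc e)"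
    show "y \<in> Dg s (Suc e)"
    proof (rule Dg_SucI[OF yF])
      fix u assume lu0: "lt s u y"
      then have lu: "lt (oplus r s) (Inr u) (Inr y)" by simp
      then obtain z' where z: "lt (oplus r s) (Inr u) z'" "lt (oplus r s) z' (Inr y)" "z' \<in> Dg (oplus r s) e"
        using Dg_SucD[OF A] by blast
      then obtain z where zz: "z' = Inr z" by (cases z') auto
      then show "\<exists>z. lt s u z \<and> lt s z y \<and> z \<in> Dg s e" using z Suc.IH[of u z] by auto
    qed
  next
    assume A: "y \<in> Dg s (Suc e)"
    show "Inr y \<in> Dg (oplus r s) (Suc e)"
    proof (rule Dg_SucI)
      show "Inr y \<in> Field (oplus r s)" using yF by simp
    next
      fix y' assume ly: "lt (oplus r s) y' (Inr y)"
      show "\<exists>z. lt (oplus r s) y' z \<and> lt (oplus r s) z (Inr y) \<and> z \<in> Dg (oplus r s) e"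
      proof (cases y')
        case (Inl u)
        obtain z where z: "lt s y0 z" "lt s z y" "z \<in> Dg s e" using Dg_SucD[OF A] Suc.prems by blast
        then show ?thesis using Inl ly Suc.IH[of y0 z] lt_Field[OF z(1)]
          by (intro exI[of _ "Inr z"]) auto
      next
        case (Inr u)
        then have "lt s u y" using ly by simp
        then obtain z where z: "lt s u z" "lt s z y" "z \<in> Dg s e" using Dg_SucD[OF A] by blast
        then show ?thesis using Inr Suc.IH[of u z] by (intro exI[of _ "Inr z"]) auto
      qed
    qed
  qed
qed

lemma Dg_oplus_min:
  assumes yF: "y \<in> Field s" and ymin: "\<forall>u. \<not> lt s u y" and ne: "Field r \<noteq> {}"
  shows "Inr y \<in> Dg (oplus r s) (Suc e) \<longleftrightarrow> cof r (Dg r e)"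
proof
  assume A: "Inr y \<in> Dg (oplus r s) (Suc e)"
  show "cof r (Dg r e)" unfolding cof_def
  proof
    fix w assume wF: "w \<in> Field r"
    then have "lt (oplus r s) (Inl w) (Inr y)" using yF by simp
    then obtain z' where z: "lt (oplus r s) (Inl w) z'" "lt (oplus r s) z' (Inr y)" "z' \<in> Dg (oplus r s) e"
      using A by (simp only: Dg.simps) blast
    have "\<not> (\<exists>u. z' = Inr u)" using z(2) ymin by auto
    then obtain z where zz: "z' = Inl z" by (cases z') auto
    then show "\<exists>z. lt r w z \<and> z \<in> Dg r e" using z Dg_oplus_left lt_Field by fastforce
  qed
next
  assume C: "cof r (Dg r e)"
  show "Inr y \<in> Dg (oplus r s) (Suc e)"
  proof (rule Dg_SucI)
    show "Inr y \<in> Field (oplus r s)" using yF by simp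
  next
    fix y' assume ly: "lt (oplus r s) y' (Inr y)"
    then obtain u where u: "y' = Inl u" "u \<in> Field r" using ymin by (cases y') auto
    then obtain z where z: "lt r u z" "z \<in> Dg r e" using C unfolding cof_def by auto
    then show "\<exists>z. lt (oplus r s) y' z \<and> lt (oplus r s) z (Inr y) \<and> z \<in> Dg (oplus r s) e"
      using u yF Dg_oplus_left lt_Field by (intro exI[of _ "Inl z"]) fastforce
  qed
qed


abbreviation Z :: "nat \<Rightarrow> nat list" where "Z n \<equiv> replicate n 0"

definition tz :: "nat list \<Rightarrow> nat" where
  "tz xs = length (takeWhile (\<lambda>x. x = 0) (rev xs))"

lemma all_zero_iff: "(\<forall>x\<in>set xs. x = 0) \<longleftrightarrow> xs = Z (length xs)"
  by (induction xs) auto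

lemma tz_rep [simp]: "tz (Z n) = n"
  by (simp add: tz_def)

lemma tz_Cons_nz: "xs \<noteq> Z (length xs) \<Longrightarrow> tz (v # xs) = tz xs"
proof -
  assume "xs \<noteq> Z (length xs)"
  then have "\<not> (\<forall>x\<in>set (rev xs). x = 0)" using all_zero_iff[of xs] by simp
  then show ?thesis by (auto simp: tz_def takeWhile_append)
qed

lemma tz_Cons_rep: "v \<noteq> 0 \<Longrightarrow> tz (v # Z n) = n"
  by (simp add: tz_def takeWhile_append)

lemma length_takeWhile_le: "length (takeWhile P xs) \<le> length xs"
  by (induction xs) auto

lemma length_takeWhile_less: "\<exists>x\<in>set xs. \<not> P x \<Longrightarrow> length (takeWhile P xs) < length xs"
  by (induction xs) auto

lemma tz_less: "xs \<noteq> Z (length xs) \<Longrightarrow> tz xs < length xs"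
proof -
  assume "xs \<noteq> Z (length xs)"
  then have "\<exists>x\<in>set (rev xs). \<not> x = 0" using all_zero_iff[of xs] by simp
  then show ?thesis unfolding tz_def using length_takeWhile_less[of "rev xs" "\<lambda>x. x = 0"] by simp
qed

abbreviation less_nat_rel :: "nat rel" where "less_nat_rel \<equiv> {(a, b). a < b}"

lemma lex_irr [simp]: "(xs, xs) \<notin> lex less_nat_rel"
  by (induction xs) auto

lemma Om_in: "(xs, ys) \<in> omega_pow m \<longleftrightarrow> length xs = m \<and> length ys = m \<and>
    (xs = ys \<or> (xs, ys) \<in> lex less_nat_rel)"
  by (auto simp: omega_pow_def lenlex_conv)

lemma lt_Om: "lt (omega_pow m) xs ys \<longleftrightarrow> length xs = m \<and> length ys = m \<and> (xs, ys) \<in> lex less_nat_rel"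
  by (auto simp: lt_def Om_in)

lemma Field_Om: "Field (omega_pow m) = {xs. length xs = m}"
  by (auto simp: Field_def Om_in)

lemma Om_zero_min: "\<not> lt (omega_pow m) xs (Z m)"
proof -
  have "(xs, Z n) \<notin> lex less_nat_rel" for n
    by (induction n arbitrary: xs) (auto simp: neq_Nil_conv, case_tac xs, auto)
  then show ?thesis by (simp add: lt_Om)
qed

lemma Om_zero_lt: "length xs = m \<Longrightarrow> xs \<noteq> Z m \<Longrightarrow> lt (omega_pow m) (Z m) xs"
proof (induction m arbitrary: xs)
  case 0 then show ?case by simp
next
  case (Suc m)
  then obtain v ys where xs: "xs = v # ys" "length ys = m" by (cases xs) auto
  show ?case
  proof (cases "v = 0")
    case True
    then have "ys \<noteq> Z m" using Suc xs by auto
    then show ?thesis using Suc.IH[of ys] xs True by (simp add: lt_Om)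
  next
    case False then show ?thesis using xs by (simp add: lt_Om)
  qed
qed

lemma ex_len: "\<exists>x::nat list. length x = m"
  by (rule exI[of _ "Z m"]) simp

definition natle :: "nat rel" where "natle = {(i, j). i \<le> j}"

lemma Field_natle [simp]: "Field natle = UNIV"
  by (auto simp: Field_def natle_def)

lemma Field_natle' [simp]: "Field {(x, y). x \<le> (y::nat)} = UNIV"
  by (auto simp: Field_def)

lemma Om_Suc_iso:
  "bij_betw (\<lambda>(v, xs). v # xs) (Field (osum natle (\<lambda>_. omega_pow m))) (Field (omega_pow (Suc m)))"
  "\<forall>x\<in>Field (osum natle (\<lambda>_. omega_pow m)). \<forall>y\<in>Field (osum natle (\<lambda>_. omega_pow m)).
      (x, y) \<in> osum natle (\<lambda>_. omega_pow m) \<longleftrightarrow>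
      ((\<lambda>(v, xs). v # xs) x, (\<lambda>(v, xs). v # xs) y) \<in> omega_pow (Suc m)"
proof -
  show "bij_betw (\<lambda>(v, xs). v # xs) (Field (osum natle (\<lambda>_. omega_pow m))) (Field (omega_pow (Suc m)))"
    unfolding bij_betw_def inj_on_def
    by (auto simp: Field_osum Field_Om length_Suc_conv image_iff)
  show "\<forall>x\<in>Field (osum natle (\<lambda>_. omega_pow m)). \<forall>y\<in>Field (osum natle (\<lambda>_. omega_pow m)).
      (x, y) \<in> osum natle (\<lambda>_. omega_pow m) \<longleftrightarrow>
      ((\<lambda>(v, xs). v # xs) x, (\<lambda>(v, xs). v # xs) y) \<in> omega_pow (Suc m)"
    by (auto simp: Field_osum Field_Om in_osum Om_in natle_def)
qed

lemma Om_D_cof: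
  "(\<forall>xs e. length xs = m \<longrightarrow> xs \<noteq> Z m \<longrightarrow> (xs \<in> Dg (omega_pow m) e \<longleftrightarrow> e \<le> tz xs)) \<and>
   (0 < m \<longrightarrow> (\<forall>e. cof (omega_pow m) (Dg (omega_pow m) e) \<longleftrightarrow> e < m))"
proof (induction m)
  case 0
  then show ?case by simp
next
  case (Suc m)
  let ?O = "osum natle (\<lambda>_. omega_pow m)"
  have anti: "\<forall>i j. (i, j) \<in> natle \<longrightarrow> (j, i) \<in> natle \<longrightarrow> i = j" by (auto simp: natle_def)
  have tot: "\<forall>i\<in>Field natle. \<forall>j\<in>Field natle. (i, j) \<in> natle \<or> (j, i) \<in> natle" by (auto simp: natle_def)
  have D: "xs \<in> Dg (omega_pow (Suc m)) e \<longleftrightarrow> e \<le> tz xs" if xs: "length xs = Suc m" "xs \<noteq> Z (Suc m)" for xs e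
  proof -
    obtain v ys where vys: "xs = v # ys" "length ys = m" using xs by (cases xs) auto
    have vF: "(v, ys) \<in> Field ?O" using vys by (simp add: Field_osum Field_Om)
    have iso: "xs \<in> Dg (omega_pow (Suc m)) e \<longleftrightarrow> (v, ys) \<in> Dg ?O e"
      using Dg_iso[OF Om_Suc_iso vF, of e] vys by simp
    show ?thesis
    proof (cases "ys = Z m")
      case False
      have "(v, ys) \<in> Dg ?O e \<longleftrightarrow> ys \<in> Dg (omega_pow m) e"
        using Dg_osum_nonmin[OF anti, of v "\<lambda>_. omega_pow m" "Z m" ys e] Om_zero_lt[OF vys(2) False]
        by simp
      then show ?thesis using iso Suc.IH False vys tz_Cons_nz[of ys v] by simp
    next
      case True
      then have v0: "v \<noteq> 0" using xs vys by auto
      have tzx: "tz xs = m" using vys True tz_Cons_rep[OF v0] by simp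
      show ?thesis
      proof (cases e)
        case 0 then show ?thesis using iso vF by simp
      next
        case (Suc e')
        show ?thesis
        proof (cases "m = 0")
          case True
          have "lt ?O (v - 1, []) (v, [])" using v0 True by (auto simp: lt_osum Field_Om natle_def)
          moreover have "\<forall>z. \<not> (lt ?O (v - 1, []) z \<and> lt ?O z (v, []))"
          proof
            fix z show "\<not> (lt ?O (v - 1, []) z \<and> lt ?O z (v, []))"
              by (cases z) (auto simp: lt_osum Field_Om natle_def lt_Om)
          qed
          ultimately have "(v, []) \<notin> Dg ?O (Suc e')" by (rule Dg_imm_pred)
          then show ?thesis using iso Suc tzx True vys \<open>ys = Z m\<close> by simp
        next
          case False
          have "(v, ys) \<in> Dg ?O (Suc e') \<longleftrightarrow> cof (omega_pow m) (Dg (omega_pow m) e')"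
            apply (rule Dg_osum_min[OF anti tot, where i'="v - 1"])
            using v0 vys True Om_zero_min[of m] False ex_len[of m] by (auto simp: natle_def Field_Om)
          then show ?thesis using iso Suc Suc.IH False tzx by auto
        qed
      qed
    qed
  qed
  have C: "cof (omega_pow (Suc m)) (Dg (omega_pow (Suc m)) e) \<longleftrightarrow> e < Suc m" for e
  proof
    assume "cof (omega_pow (Suc m)) (Dg (omega_pow (Suc m)) e)"
    moreover have "Z (Suc m) \<in> Field (omega_pow (Suc m))" by (simp add: Field_Om)
    ultimately obtain z where z: "lt (omega_pow (Suc m)) (Z (Suc m)) z" "z \<in> Dg (omega_pow (Suc m)) e"
      unfolding cof_def by blast
    then have "length z = Suc m" "z \<noteq> Z (Suc m)" by (auto simp: lt_def Om_in)
    then show "e < Suc m" using D z tz_less[of z] by fastforce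
  next
    assume e: "e < Suc m"
    show "cof (omega_pow (Suc m)) (Dg (omega_pow (Suc m)) e)" unfolding cof_def
    proof
      fix w assume "w \<in> Field (omega_pow (Suc m))"
      then obtain h t where w: "w = h # t" "length t = m" by (auto simp: Field_Om length_Suc_conv)
      let ?z = "Suc h # Z m"
      have "lt (omega_pow (Suc m)) w ?z" using w by (simp add: lt_Om)
      moreover have "?z \<in> Dg (omega_pow (Suc m)) e" using D[of ?z e] e tz_Cons_rep[of "Suc h" m] by simp
      ultimately show "\<exists>z. lt (omega_pow (Suc m)) w z \<and> z \<in> Dg (omega_pow (Suc m)) e" by blast
    qed
  qed
  show ?case using D C by blast
qed

lemma Om_D: "length xs = m \<Longrightarrow> xs \<noteq> Z m \<Longrightarrow> xs \<in> Dg (omega_pow m) e \<longleftrightarrow> e \<le> tz xs"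
  using Om_D_cof by blast

lemma Om_cof: "0 < m \<Longrightarrow> cof (omega_pow m) (Dg (omega_pow m) e) \<longleftrightarrow> e < m"
  using Om_D_cof by blast


lemma in_fin [simp]: "(i, j) \<in> fin_ord n \<longleftrightarrow> i \<le> j \<and> j < n"
  by (simp add: fin_ord_def)

lemma in_osp [simp]: "(i, j) \<in> omega_star_pos \<longleftrightarrow> 1 \<le> j \<and> j \<le> i"
  by (simp add: omega_star_pos_def)

lemma Field_fin [simp]: "Field (fin_ord n) = {..<n}"
  by (auto simp: Field_def fin_ord_def)

lemma Field_osp [simp]: "Field omega_star_pos = {k. 1 \<le> k}"
  by (auto simp: Field_def omega_star_pos_def)

abbreviation Cop where "Cop \<equiv> copies_omega_pow"

lemma Field_Cop: "Field (Cop n m) = {(c, xs). c < n \<and> length xs = m}"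
  by (simp add: copies_omega_pow_def Field_osum Field_Om)

lemma lt_Cop: "lt (Cop n m) (c, xs) (c', ys) \<longleftrightarrow> c < n \<and> c' < n \<and> length xs = m \<and> length ys = m \<and>
   ((c \<noteq> c' \<and> c \<le> c') \<or> (c = c' \<and> lt (omega_pow m) xs ys))"
  by (auto simp: copies_omega_pow_def lt_osum Field_Om in_fin)

lemma in_Cop: "((c, xs), (c', ys)) \<in> Cop n m \<longleftrightarrow> c < n \<and> c' < n \<and> length xs = m \<and> length ys = m \<and>
   ((c \<noteq> c' \<and> c \<le> c') \<or> (c = c' \<and> (xs, ys) \<in> omega_pow m))"
  by (auto simp: copies_omega_pow_def in_osum Field_Om in_fin)

lemma anti_fin: "\<forall>i j. (i, j) \<in> fin_ord n \<longrightarrow> (j, i) \<in> fin_ord n \<longrightarrow> i = j"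
  by (auto simp: in_fin)

lemma tot_fin: "\<forall>i\<in>Field (fin_ord n). \<forall>j\<in>Field (fin_ord n). (i, j) \<in> fin_ord n \<or> (j, i) \<in> fin_ord n"
  by (auto simp: in_fin)

lemma Cop_D1: "c < n \<Longrightarrow> length xs = m \<Longrightarrow> xs \<noteq> Z m \<Longrightarrow>
    (c, xs) \<in> Dg (Cop n m) e \<longleftrightarrow> e \<le> tz xs"
  unfolding copies_omega_pow_def
  using Dg_osum_nonmin[OF anti_fin, of c n "\<lambda>_. omega_pow m" "Z m" xs e] Om_zero_lt[of xs m] Om_D[of xs m e]
  by simp

lemma Cop_D2: "0 < c \<Longrightarrow> c < n \<Longrightarrow> 0 < m \<Longrightarrow> (c, Z m) \<in> Dg (Cop n m) e \<longleftrightarrow> e \<le> m"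
proof (cases e)
  case 0
  assume "0 < c" "c < n"
  then show ?thesis using 0 by (simp add: Field_Cop)
next
  case (Suc e')
  assume a: "0 < c" "c < n" "0 < m"
  have "(c, Z m) \<in> Dg (Cop n m) (Suc e') \<longleftrightarrow> cof (omega_pow m) (Dg (omega_pow m) e')"
    unfolding copies_omega_pow_def
    apply (rule Dg_osum_min[OF anti_fin tot_fin, where i'="c - 1"])
    using a Om_zero_min[of m] ex_len[of m] by (auto simp: in_fin Field_Om)
  then show ?thesis using Om_cof[OF a(3)] Suc by (simp add: Suc_le_eq)
qed

lemma Cop_cof: "0 < n \<Longrightarrow> 0 < m \<Longrightarrow> cof (Cop n m) (Dg (Cop n m) e) \<longleftrightarrow> e < m"
  unfolding copies_omega_pow_def
  apply (subst cof_osum_max[OF anti_fin, where j="n - 1"])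
  using Om_cof[of m e] ex_len[of m] by (auto simp: in_fin Field_Om)

lemma Cop_min: "\<not> lt (Cop n m) y (0, Z m)"
  using Om_zero_min[of m] by (cases y) (auto simp: lt_Cop)

abbreviation Aa :: "nat \<Rightarrow> nat \<Rightarrow> (nat \<times> nat \<times> nat list) rel" where
  "Aa a b \<equiv> osum omega_star_pos (\<lambda>k. Cop (a + k) (b + k))"

lemma anti_osp: "\<forall>i j. (i, j) \<in> omega_star_pos \<longrightarrow> (j, i) \<in> omega_star_pos \<longrightarrow> i = j"
  by (auto simp: in_osp)

lemma tot_osp: "\<forall>i\<in>Field omega_star_pos. \<forall>j\<in>Field omega_star_pos. (i, j) \<in> omega_star_pos \<or> (j, i) \<in> omega_star_pos"
  by (auto simp: in_osp)

lemma Field_A: "Field (Aa a b) = {(k, c, xs). 1 \<le> k \<and> c < a + k \<and> length xs = b + k}"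
  by (auto simp: Field_osum Field_Cop)

lemma lt_A: "lt (Aa a b) (k, q) (k', q') \<longleftrightarrow> 1 \<le> k \<and> 1 \<le> k' \<and> q \<in> Field (Cop (a + k) (b + k)) \<and>
    q' \<in> Field (Cop (a + k') (b + k')) \<and> ((k \<noteq> k' \<and> k' \<le> k) \<or> (k = k' \<and> lt (Cop (a + k) (b + k)) q q'))"
  by (auto simp: lt_osum in_osp)

lemma in_A: "((k, q), (k', q')) \<in> Aa a b \<longleftrightarrow> 1 \<le> k \<and> 1 \<le> k' \<and> q \<in> Field (Cop (a + k) (b + k)) \<and>
    q' \<in> Field (Cop (a + k') (b + k')) \<and> ((k \<noteq> k' \<and> k' \<le> k) \<or> (k = k' \<and> (q, q') \<in> Cop (a + k) (b + k)))"
  by (auto simp: in_osum in_osp)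

lemma A_D1: "1 \<le> k \<Longrightarrow> c < a + k \<Longrightarrow> length xs = b + k \<Longrightarrow> xs \<noteq> Z (b + k) \<Longrightarrow>
    (k, c, xs) \<in> Dg (Aa a b) e \<longleftrightarrow> e \<le> tz xs"
  using Dg_osum_nonmin[OF anti_osp, of k "\<lambda>k. Cop (a + k) (b + k)" "(c, Z (b + k))" "(c, xs)" e]
    Om_zero_lt[of xs "b + k"] Cop_D1[of c "a + k" xs "b + k" e]
  by (simp add: lt_Cop)

lemma A_D2: "1 \<le> k \<Longrightarrow> 0 < c \<Longrightarrow> c < a + k \<Longrightarrow>
    (k, c, Z (b + k)) \<in> Dg (Aa a b) e \<longleftrightarrow> e \<le> b + k"
  using Dg_osum_nonmin[OF anti_osp, of k "\<lambda>k. Cop (a + k) (b + k)" "(0, Z (b + k))" "(c, Z (b + k))" e]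
    Cop_D2[of c "a + k" "b + k" e]
  by (simp add: lt_Cop)

lemma A_D3: "1 \<le> k \<Longrightarrow> (k, 0, Z (b + k)) \<in> Dg (Aa a b) e \<longleftrightarrow> e \<le> b + k + 1"
proof (cases e)
  case 0
  assume "1 \<le> k"
  then show ?thesis using 0 by (simp add: Field_A)
next
  case (Suc e')
  assume k: "1 \<le> k"
  have "(k, 0, Z (b + k)) \<in> Dg (Aa a b) (Suc e') \<longleftrightarrow>
      cof (Cop (a + (k + 1)) (b + (k + 1))) (Dg (Cop (a + (k + 1)) (b + (k + 1))) e')"
    apply (rule Dg_osum_min[OF anti_osp tot_osp, where i'="k + 1"])
    using k Cop_min[of "a + k" "b + k"] by (auto simp: in_osp Field_Cop ex_len)
  then show ?thesis using Cop_cof[of "a + (k + 1)" "b + (k + 1)" e'] Suc by (simp add: less_Suc_eq_le)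
qed

lemma A_cof: "cof (Aa a b) (Dg (Aa a b) e) \<longleftrightarrow> e < b + 1"
  apply (subst cof_osum_max[OF anti_osp, where j=1])
  using Cop_cof[of "a + 1" "b + 1" e] by (auto simp: in_osp Field_Cop ex_len)

section \<open>omega^omega\<close>

abbreviation nlz :: "nat list \<Rightarrow> bool" where "nlz ys \<equiv> ys = [] \<or> hd ys \<noteq> 0"

lemma W_in: "(xs, ys) \<in> omega_omega \<longleftrightarrow> nlz xs \<and> nlz ys \<and> (xs = ys \<or> (xs, ys) \<in> lenlex less_nat_rel)"
  by (simp add: omega_omega_def)

lemma Field_W: "Field omega_omega = {xs. nlz xs}"
proof
  show "Field omega_omega \<subseteq> {xs. nlz xs}" by (auto simp: Field_def W_in)
  show "{xs. nlz xs} \<subseteq> Field omega_omega"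
  proof
    fix x assume "x \<in> {xs. nlz xs}"
    then have "(x, x) \<in> omega_omega" by (simp add: W_in)
    then show "x \<in> Field omega_omega" by (rule FieldI1)
  qed
qed

lemma trans_less_nat_rel: "trans less_nat_rel"
  by (auto simp: trans_def)

lemma trans_W: "trans omega_omega"
  using lenlex_transI[OF trans_less_nat_rel] unfolding trans_def W_in by blast

lemma trans_Om: "trans (omega_pow m)"
  using lex_transI[OF trans_less_nat_rel] unfolding trans_def Om_in by blast

definition pad :: "nat \<Rightarrow> nat list \<Rightarrow> nat list" where
  "pad n ys = Z (n - length ys) @ ys"

lemma length_pad: "length ys \<le> n \<Longrightarrow> length (pad n ys) = n"
  by (simp add: pad_def)

lemma dropWhile_pad: "nlz ys \<Longrightarrow> dropWhile (\<lambda>x. x = 0) (Z k @ ys) = ys"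
  by (induction k) (cases ys; auto)+

lemma pad_dropWhile: "pad (length xs) (dropWhile (\<lambda>x. x = 0) xs) = xs"
proof (induction xs)
  case Nil then show ?case by (simp add: pad_def)
next
  case (Cons x xs)
  show ?case
  proof (cases "x = 0")
    case True
    have le: "length (dropWhile (\<lambda>x. x = 0) xs) \<le> length xs" by (rule length_dropWhile_le)
    then have "Suc (length xs) - length (dropWhile (\<lambda>x. x = 0) xs) = Suc (length xs - length (dropWhile (\<lambda>x. x = 0) xs))"
      by simp
    then show ?thesis using Cons True by (simp add: pad_def)
  next
    case False then show ?thesis by (simp add: pad_def)
  qed
qed

lemma dropWhile_pad': "nlz ys \<Longrightarrow> dropWhile (\<lambda>x. x = 0) (pad n ys) = ys"
  unfolding pad_def by (rule dropWhile_pad)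

lemma pad_inj: "nlz ys \<Longrightarrow> nlz ys' \<Longrightarrow> pad n ys = pad n ys' \<Longrightarrow> ys = ys'"
proof -
  assume a: "nlz ys" "nlz ys'" "pad n ys = pad n ys'"
  have "ys = dropWhile (\<lambda>x. x = 0) (pad n ys)" using dropWhile_pad'[OF a(1)] by simp
  also have "\<dots> = dropWhile (\<lambda>x. x = 0) (pad n ys')" using a(3) by simp
  also have "\<dots> = ys'" using dropWhile_pad'[OF a(2)] by simp
  finally show ?thesis .
qed

lemma lex_zero_first: "h \<noteq> 0 \<Longrightarrow> length u = length t \<Longrightarrow> (0 # u, h # t) \<in> lex less_nat_rel"
  by simp

lemma lex_zero_first': "h \<noteq> 0 \<Longrightarrow> (h # t, 0 # u) \<notin> lex less_nat_rel"
  by simp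

lemma pad_lex_lt:
  assumes "nlz ys'" "length ys < length ys'" "length ys' \<le> n"
  shows "(pad n ys, pad n ys') \<in> lex less_nat_rel" "(pad n ys', pad n ys) \<notin> lex less_nat_rel"
proof -
  obtain h t where ys': "ys' = h # t" "h \<noteq> 0" using assms by (cases ys') auto
  obtain d where d: "length ys' = Suc (length ys + d)" using less_imp_Suc_add[OF assms(2)] by blast
  have e: "n - length ys = (n - length ys') + Suc d" using d assms(3) by linarith
  have p1: "pad n ys = Z (n - length ys') @ (0 # (Z d @ ys))"
    unfolding pad_def e replicate_add by simp
  have p2: "pad n ys' = Z (n - length ys') @ (h # t)" using ys' by (simp add: pad_def)
  have len: "length (Z d @ ys) = length t" using d ys' by simp
  show "(pad n ys, pad n ys') \<in> lex less_nat_rel"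
    unfolding p1 p2 by (rule lex_append_leftI) (use ys' len in simp)
  show "(pad n ys', pad n ys) \<notin> lex less_nat_rel"
    unfolding p1 p2 using lex_append_left_iff[of less_nat_rel] ys' by simp
qed

lemma pad_ord: "nlz ys \<Longrightarrow> nlz ys' \<Longrightarrow> length ys \<le> n \<Longrightarrow> length ys' \<le> n \<Longrightarrow>
    (ys, ys') \<in> omega_omega \<longleftrightarrow> (pad n ys, pad n ys') \<in> omega_pow n"
proof -
  assume a: "nlz ys" "nlz ys'" "length ys \<le> n" "length ys' \<le> n"
  have eq: "pad n ys = pad n ys' \<longleftrightarrow> ys = ys'" using pad_inj a by blast
  have "(pad n ys, pad n ys') \<in> lex less_nat_rel \<longleftrightarrow> (ys, ys') \<in> lenlex less_nat_rel"
  proof (cases "length ys = length ys'")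
    case True
    then show ?thesis using lex_append_left_iff[of less_nat_rel "Z (n - length ys)" ys ys']
      by (simp add: pad_def lenlex_conv)
  next
    case False
    then consider "length ys < length ys'" | "length ys' < length ys" by linarith
    then show ?thesis
    proof cases
      case 1 then show ?thesis using pad_lex_lt[of ys' ys n] a by (simp add: lenlex_conv)
    next
      case 2 then show ?thesis using pad_lex_lt[of ys ys' n] a by (auto simp: lenlex_conv)
    qed
  qed
  then show ?thesis using eq a by (simp add: W_in Om_in length_pad)
qed

lemma W_down_iso:
  assumes zs: "nlz zs"
  shows "bij_betw (pad (length zs)) {u. (u, zs) \<in> omega_omega} {u. (u, pad (length zs) zs) \<in> omega_pow (length zs)}"
    "\<forall>x\<in>{u. (u, zs) \<in> omega_omega}. \<forall>y\<in>{u. (u, zs) \<in> omega_omega}.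
       (x, y) \<in> omega_omega \<longleftrightarrow> (pad (length zs) x, pad (length zs) y) \<in> omega_pow (length zs)"
proof -
  let ?n = "length zs"
  have dn: "nlz u \<and> length u \<le> ?n" if "(u, zs) \<in> omega_omega" for u
    using that lenlex_length by (auto simp: W_in)
  have po: "(x, y) \<in> omega_omega \<longleftrightarrow> (pad ?n x, pad ?n y) \<in> omega_pow ?n"
    if "(x, zs) \<in> omega_omega" "(y, zs) \<in> omega_omega" for x y
  proof -
    have "nlz x" "nlz y" "length x \<le> ?n" "length y \<le> ?n" using dn that by auto
    then show ?thesis by (rule pad_ord)
  qed
  show "\<forall>x\<in>{u. (u, zs) \<in> omega_omega}. \<forall>y\<in>{u. (u, zs) \<in> omega_omega}.
       (x, y) \<in> omega_omega \<longleftrightarrow> (pad ?n x, pad ?n y) \<in> omega_pow ?n"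
    using po by simp
  have zz: "(zs, zs) \<in> omega_omega" using zs by (simp add: W_in)
  show "bij_betw (pad ?n) {u. (u, zs) \<in> omega_omega} {u. (u, pad ?n zs) \<in> omega_pow ?n}"
    unfolding bij_betw_def
  proof (intro conjI)
    show "inj_on (pad ?n) {u. (u, zs) \<in> omega_omega}"
    proof (rule inj_onI)
      fix x y assume "x \<in> {u. (u, zs) \<in> omega_omega}" "y \<in> {u. (u, zs) \<in> omega_omega}" "pad ?n x = pad ?n y"
      then show "x = y" using dn pad_inj[of x y ?n] by simp
    qed
    show "pad ?n ` {u. (u, zs) \<in> omega_omega} = {u. (u, pad ?n zs) \<in> omega_pow ?n}"
    proof
      show "pad ?n ` {u. (u, zs) \<in> omega_omega} \<subseteq> {u. (u, pad ?n zs) \<in> omega_pow ?n}"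
      proof
        fix x assume "x \<in> pad ?n ` {u. (u, zs) \<in> omega_omega}"
        then obtain u where u: "(u, zs) \<in> omega_omega" "x = pad ?n u" by blast
        then show "x \<in> {u. (u, pad ?n zs) \<in> omega_pow ?n}" using po[OF u(1) zz] by simp
      qed
      show "{u. (u, pad ?n zs) \<in> omega_pow ?n} \<subseteq> pad ?n ` {u. (u, zs) \<in> omega_omega}"
      proof
        fix x assume "x \<in> {u. (u, pad ?n zs) \<in> omega_pow ?n}"
        then have x: "(x, pad ?n zs) \<in> omega_pow ?n" by simp
        then have lx: "length x = ?n" by (simp add: Om_in)
        let ?u = "dropWhile (\<lambda>x. x = 0) x"
        have nu: "nlz ?u"
        proof (cases "?u = []")
          case False then show ?thesis using hd_dropWhile[OF False] by simp
        qed simp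
        have lu: "length ?u \<le> ?n" using lx length_dropWhile_le[of "\<lambda>x. x = 0" x] by simp
        have pu: "pad ?n ?u = x" using pad_dropWhile[of x] lx by simp
        have "(?u, zs) \<in> omega_omega" using pad_ord[OF nu zs lu order.refl] x pu by simp
        then have "?u \<in> {u. (u, zs) \<in> omega_omega}" by simp
        then show "x \<in> pad ?n ` {u. (u, zs) \<in> omega_omega}" using pu by (metis image_eqI)
      qed
    qed
  qed
qed

lemma W_D: "nlz zs \<Longrightarrow> zs \<noteq> [] \<Longrightarrow> zs \<in> Dg omega_omega e \<longleftrightarrow> e \<le> tz zs"
proof -
  assume zs: "nlz zs" "zs \<noteq> []"
  have p: "pad (length zs) zs = zs" by (simp add: pad_def)
  have "(zs, zs) \<in> omega_omega" using zs by (simp add: W_in)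
  from Dg_down[OF trans_W trans_Om W_down_iso[OF zs(1)] this]
  have "zs \<in> Dg omega_omega e \<longleftrightarrow> zs \<in> Dg (omega_pow (length zs)) e" using p by simp
  moreover have "zs \<noteq> Z (length zs)" using zs by (cases zs) auto
  ultimately show ?thesis using Om_D[of zs "length zs" e] by simp
qed


lemma Field_L: "Field (Lgen a b) = Inl ` Field (Aa a b) \<union> Inr ` Field omega_omega"
  by (simp add: Lgen_def Field_oplus)

lemma Inl_Field_L [simp]: "Inl (k, c, xs) \<in> Field (Lgen a b) \<longleftrightarrow> 1 \<le> k \<and> c < a + k \<and> length xs = b + k"
  by (simp add: Lgen_def Field_A)

lemma Inr_Field_L [simp]: "Inr zs \<in> Field (Lgen a b) \<longleftrightarrow> nlz zs"
  by (simp add: Lgen_def Field_W)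

definition dgL :: "nat \<Rightarrow> (nat \<times> nat \<times> nat list) + nat list \<Rightarrow> nat" where
  "dgL b v = (case v of Inl (k, c, xs) \<Rightarrow> if xs = Z (length xs) then (if c = 0 then b + k + 1 else b + k) else tz xs
     | Inr zs \<Rightarrow> if zs = [] then b + 1 else tz zs)"

lemma L_D: "v \<in> Field (Lgen a b) \<Longrightarrow> v \<in> Dg (Lgen a b) e \<longleftrightarrow> e \<le> dgL b v"
proof (cases v)
  case (Inl q)
  assume vF: "v \<in> Field (Lgen a b)"
  obtain k c xs where q: "q = (k, c, xs)" by (cases q)
  have qF: "q \<in> Field (Aa a b)" using vF Inl by (simp add: Lgen_def)
  then have k: "1 \<le> k" "c < a + k" "length xs = b + k" using q by (auto simp: Field_A)
  have "v \<in> Dg (Lgen a b) e \<longleftrightarrow> q \<in> Dg (Aa a b) e"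
    using Dg_oplus_left[OF qF] Inl by (simp add: Lgen_def)
  also have "\<dots> \<longleftrightarrow> e \<le> dgL b v"
  proof (cases "xs = Z (b + k)")
    case True
    show ?thesis
    proof (cases "c = 0")
      case True
      then show ?thesis using A_D3[OF k(1), of b a e] \<open>xs = Z (b + k)\<close> q Inl by (simp add: dgL_def)
    next
      case False
      then show ?thesis using A_D2[OF k(1) _ k(2), of b e] \<open>xs = Z (b + k)\<close> q Inl by (simp add: dgL_def)
    qed
  next
    case False
    then show ?thesis using A_D1[OF k False, of e] q Inl k(3) by (simp add: dgL_def)
  qed
  finally show ?thesis .
next
  case (Inr zs)
  assume vF: "v \<in> Field (Lgen a b)"
  then have nz: "nlz zs" using Inr by simp
  show ?thesis
  proof (cases "zs = []")
    case True
    show ?thesis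
    proof (cases e)
      case 0 then show ?thesis using vF by simp
    next
      case (Suc e')
      have "(1, 0, Z (b + 1)) \<in> Field (Aa a b)" by (simp add: Field_A)
      then have ne: "Field (Aa a b) \<noteq> {}" by blast
      have ymin: "\<forall>u. \<not> lt omega_omega u []" by (auto simp: lt_def W_in)
      have "Inr [] \<in> Dg (Lgen a b) (Suc e') \<longleftrightarrow> cof (Aa a b) (Dg (Aa a b) e')"
        unfolding Lgen_def by (rule Dg_oplus_min[OF _ ymin ne]) (simp add: Field_W)
      then show ?thesis using A_cof[of a b e'] True Inr Suc by (simp add: dgL_def less_Suc_eq_le)
    qed
  next
    case False
    have "lt omega_omega [] zs" using False nz by (simp add: lt_def W_in)
    then have "Inr zs \<in> Dg (Lgen a b) e \<longleftrightarrow> zs \<in> Dg omega_omega e"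
      unfolding Lgen_def by (rule Dg_oplus_right)
    then show ?thesis using W_D[OF nz False] Inr False by (simp add: dgL_def)
  qed
qed

lemma in_L1: "(Inl (k, c, xs), Inl (k', c', xs')) \<in> Lgen a b \<longleftrightarrow>
   1 \<le> k \<and> 1 \<le> k' \<and> c < a + k \<and> length xs = b + k \<and> c' < a + k' \<and> length xs' = b + k' \<and>
   ((k \<noteq> k' \<and> k' \<le> k) \<or> (k = k' \<and> ((c \<noteq> c' \<and> c \<le> c') \<or> (c = c' \<and> (xs, xs') \<in> omega_pow (b + k)))))"
  by (auto simp: Lgen_def in_A Field_Cop in_Cop)

lemma in_L2: "(Inl (k, c, xs), Inr zs) \<in> Lgen a b \<longleftrightarrow> 1 \<le> k \<and> c < a + k \<and> length xs = b + k \<and> nlz zs"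
  by (auto simp: Lgen_def Field_A Field_W)

lemma in_L3: "(Inr zs, Inl q) \<notin> Lgen a b" by (simp add: Lgen_def)

lemma in_L4: "(Inr zs, Inr zs') \<in> Lgen a b \<longleftrightarrow> (zs, zs') \<in> omega_omega" by (simp add: Lgen_def)

lemmas in_L = in_L1 in_L2 in_L3 in_L4

lemma lt_L_def: "lt (Lgen a b) v w \<longleftrightarrow> (v, w) \<in> Lgen a b \<and> v \<noteq> w" by (simp add: lt_def)

definition farL :: "nat \<times> nat \<times> nat list + nat list \<Rightarrow> nat" where
  "farL u = (case u of Inl (ku, _) \<Rightarrow> ku + 2 | Inr zs \<Rightarrow> length zs + 2)"

definition g0 :: "nat \<Rightarrow> nat \<Rightarrow> nat \<times> nat \<times> nat list + nat list" where
  "g0 b k = Inl (k, 0, Z (b + k))"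

definition S0 :: "nat \<Rightarrow> nat \<Rightarrow> nat \<Rightarrow> (nat \<times> nat \<times> nat list + nat list) set" where
  "S0 a b k = (\<lambda>c. Inl (k, c, Z (b + k))) ` {..<a + k} \<union> {Inl (k - 1, 0, Z (b + k - 1))}"

lemma W_len: "(zs, zs') \<in> omega_omega \<Longrightarrow> length zs \<le> length zs'"
  by (auto simp: W_in dest: lenlex_length)

lemma KL_A: "u \<in> Field (Lgen a b) \<Longrightarrow> farL u \<le> k \<Longrightarrow>
   g0 b k \<in> Dg (Lgen a b) (Suc (b + k)) \<and> (g0 b k, u) \<in> Lgen a b"
proof -
  assume uF: "u \<in> Field (Lgen a b)" and far: "farL u \<le> k"
  have k2: "2 \<le> k" using far by (auto simp: farL_def split: sum.splits)
  have gF: "g0 b k \<in> Field (Lgen a b)" using k2 by (simp add: g0_def)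
  have "g0 b k \<in> Dg (Lgen a b) (Suc (b + k))" using L_D[OF gF] by (simp add: dgL_def g0_def)
  moreover have "(g0 b k, u) \<in> Lgen a b"
  proof (cases u)
    case (Inl q)
    obtain ku c xs where q: "q = (ku, c, xs)" by (cases q)
    show ?thesis using uF far Inl q k2 by (auto simp: g0_def in_L farL_def)
  next
    case (Inr zs)
    then show ?thesis using uF k2 by (auto simp: g0_def in_L)
  qed
  ultimately show ?thesis by blast
qed

lemma KL_B: "u \<in> Field (Lgen a b) \<Longrightarrow> farL u \<le> k \<Longrightarrow> lt (Lgen a b) (g0 b k) v \<Longrightarrow> (v, u) \<in> Lgen a b \<Longrightarrow>
   dgL b v \<le> b + k"
proof -
  assume uF: "u \<in> Field (Lgen a b)" and far: "farL u \<le> k" and gv: "lt (Lgen a b) (g0 b k) v"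
    and vu: "(v, u) \<in> Lgen a b"
  have k2: "2 \<le> k" using far by (auto simp: farL_def split: sum.splits)
  show ?thesis
  proof (cases v)
    case (Inl q)
    obtain k' c xs where q: "q = (k', c, xs)" by (cases q)
    have h: "k' \<le> k" "length xs = b + k'" "k' = k \<and> c = 0 \<longrightarrow> xs \<noteq> Z (b + k)"
      using gv Inl q by (auto simp: g0_def lt_L_def in_L)
    show ?thesis
    proof (cases "xs = Z (length xs)")
      case True then show ?thesis using h Inl q by (auto simp: dgL_def)
    next
      case False then show ?thesis using h Inl q tz_less[OF False] by (simp add: dgL_def)
    qed
  next
    case (Inr zs)
    then obtain zs' where u: "u = Inr zs'" "(zs, zs') \<in> omega_omega" using vu
      by (cases u) (auto simp: in_L)
    have "length zs \<le> k" using W_len[OF u(2)] far u(1) by (simp add: farL_def)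
    moreover have "zs \<noteq> [] \<Longrightarrow> tz zs < length zs" using u(2)
      by (intro tz_less) (cases zs, auto simp: W_in)
    ultimately show ?thesis using Inr k2 by (auto simp: dgL_def)
  qed
qed

lemma KL_C: "u \<in> Field (Lgen a b) \<Longrightarrow> farL u \<le> k \<Longrightarrow>
   {v \<in> Dg (Lgen a b) (b + k). (g0 b k, v) \<in> Lgen a b \<and> lt (Lgen a b) v u} = S0 a b k"
proof -
  assume uF: "u \<in> Field (Lgen a b)" and far: "farL u \<le> k"
  have k2: "2 \<le> k" using far by (auto simp: farL_def split: sum.splits)
  show ?thesis
  proof
    show "{v \<in> Dg (Lgen a b) (b + k). (g0 b k, v) \<in> Lgen a b \<and> lt (Lgen a b) v u} \<subseteq> S0 a b k"
    proof clarify
      fix v assume vD: "v \<in> Dg (Lgen a b) (b + k)" and gv: "(g0 b k, v) \<in> Lgen a b"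
        and vu: "lt (Lgen a b) v u"
      have vF: "v \<in> Field (Lgen a b)" using subsetD[OF Dg_Field vD] .
      have dg: "b + k \<le> dgL b v" using L_D[OF vF] vD by simp
      show "v \<in> S0 a b k"
      proof (cases v)
        case (Inl q)
        obtain k' c xs where q: "q = (k', c, xs)" by (cases q)
        have h: "k' \<le> k" "length xs = b + k'" "c < a + k'" "1 \<le> k'"
          using gv Inl q by (auto simp: g0_def in_L)
        have xz: "xs = Z (length xs)"
        proof (rule ccontr)
          assume "xs \<noteq> Z (length xs)"
          then show False using tz_less[of xs] dg Inl q h by (simp add: dgL_def)
        qed
        show ?thesis
        proof (cases "k' = k")
          case True then show ?thesis using Inl q h xz by (auto simp: S0_def)
        next
          case False
          then have "c = 0 \<and> k' = k - 1" using dg xz Inl q h by (auto simp: dgL_def split: if_splits)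
          then show ?thesis using Inl q h xz by (auto simp: S0_def)
        qed
      next
        case (Inr zs)
        then obtain zs' where u: "u = Inr zs'" "(zs, zs') \<in> omega_omega" using vu
          by (cases u) (auto simp: lt_def in_L)
        have "length zs + 2 \<le> k" using W_len[OF u(2)] far u(1) by (simp add: farL_def)
        moreover have "zs \<noteq> [] \<Longrightarrow> tz zs < length zs" using u(2)
          by (intro tz_less) (cases zs, auto simp: W_in)
        ultimately show ?thesis using Inr dg by (auto simp: dgL_def split: if_splits)
      qed
    qed
  next
    show "S0 a b k \<subseteq> {v \<in> Dg (Lgen a b) (b + k). (g0 b k, v) \<in> Lgen a b \<and> lt (Lgen a b) v u}"
    proof
      fix v assume "v \<in> S0 a b k"
      then consider (A) c where "c < a + k" "v = Inl (k, c, Z (b + k))" | (B) "v = Inl (k - 1, 0, Z (b + k - 1))"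
        unfolding S0_def by blast
      then show "v \<in> {v \<in> Dg (Lgen a b) (b + k). (g0 b k, v) \<in> Lgen a b \<and> lt (Lgen a b) v u}"
      proof cases
        case A
        have vF: "v \<in> Field (Lgen a b)" using A k2 by simp
        have "v \<in> Dg (Lgen a b) (b + k)" using L_D[OF vF] A by (simp add: dgL_def)
        moreover have "(g0 b k, v) \<in> Lgen a b" using A k2 by (auto simp: g0_def in_L Om_in)
        moreover have "lt (Lgen a b) v u"
        proof (cases u)
          case (Inl q)
          obtain ku c' xs where q: "q = (ku, c', xs)" by (cases q)
          show ?thesis using uF far Inl q k2 A by (auto simp: lt_def in_L farL_def)
        next
          case (Inr zs)
          then show ?thesis using uF k2 A by (auto simp: lt_def in_L)
        qed
        ultimately show ?thesis by blast
      next
        case B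
        have vF: "v \<in> Field (Lgen a b)" using B k2 by simp
        have "v \<in> Dg (Lgen a b) (b + k)" using L_D[OF vF] B k2 by (simp add: dgL_def)
        moreover have "(g0 b k, v) \<in> Lgen a b" using B k2 by (auto simp: g0_def in_L)
        moreover have "lt (Lgen a b) v u"
        proof (cases u)
          case (Inl q)
          obtain ku c' xs where q: "q = (ku, c', xs)" by (cases q)
          show ?thesis using uF far Inl q k2 B by (auto simp: lt_def in_L farL_def)
        next
          case (Inr zs)
          then show ?thesis using uF k2 B by (auto simp: lt_def in_L)
        qed
        ultimately show ?thesis by blast
      qed
    qed
  qed
qed

lemma card_S0: "2 \<le> k \<Longrightarrow> card (S0 a b k) = a + k + 1"
proof -
  assume k: "2 \<le> k"
  have inj: "inj_on (\<lambda>c. Inl (k, c, Z (b + k)) :: nat \<times> nat \<times> nat list + nat list) {..<a + k}"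
    by (auto simp: inj_on_def)
  have "Inl (k - 1, 0, Z (b + k - 1)) \<notin> (\<lambda>c. Inl (k, c, Z (b + k)) :: nat \<times> nat \<times> nat list + nat list) ` {..<a + k}"
    using k by auto
  then show ?thesis using card_image[OF inj] unfolding S0_def by simp
qed

lemma L_nomin: "u \<in> Field (Lgen a b) \<Longrightarrow> \<exists>x0. lt (Lgen a b) x0 u"
proof (cases u)
  case (Inl q)
  assume uF: "u \<in> Field (Lgen a b)"
  obtain k c xs where q: "q = (k, c, xs)" by (cases q)
  show ?thesis using uF Inl q
    by (intro exI[of _ "Inl (k + 1, 0, Z (b + (k + 1)))"]) (auto simp: lt_def in_L)
next
  case (Inr zs)
  assume uF: "u \<in> Field (Lgen a b)"
  show ?thesis using uF Inr
    by (intro exI[of _ "Inl (1, 0, Z (b + 1))"]) (auto simp: lt_def in_L)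
qed

lemma total_less_nat_rel: "total less_nat_rel"
  by (auto simp: total_on_def)

lemma tot_lenlex: "xs = ys \<or> (xs, ys) \<in> lenlex less_nat_rel \<or> (ys, xs) \<in> lenlex less_nat_rel"
  using total_lenlex[OF total_less_nat_rel] unfolding total_on_def by blast

lemma tot_L: "v \<in> Field (Lgen a b) \<Longrightarrow> w \<in> Field (Lgen a b) \<Longrightarrow> (v, w) \<in> Lgen a b \<or> (w, v) \<in> Lgen a b"
proof (cases v; cases w)
  fix q q' assume a: "v \<in> Field (Lgen a b)" "w \<in> Field (Lgen a b)" "v = Inl q" "w = Inl q'"
  obtain k c xs where q: "q = (k, c, xs)" by (cases q)
  obtain k' c' xs' where q': "q' = (k', c', xs')" by (cases q')
  have "xs = xs' \<or> (xs, xs') \<in> lenlex less_nat_rel \<or> (xs', xs) \<in> lenlex less_nat_rel" by (rule tot_lenlex)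
  then show ?thesis using a q q' by (auto simp: in_L Om_in lenlex_conv)
next
  fix q zs assume a: "v \<in> Field (Lgen a b)" "w \<in> Field (Lgen a b)" "v = Inl q" "w = Inr zs"
  obtain k c xs where q: "q = (k, c, xs)" by (cases q)
  show ?thesis using a q by (auto simp: in_L)
next
  fix q zs assume a: "v \<in> Field (Lgen a b)" "w \<in> Field (Lgen a b)" "v = Inr zs" "w = Inl q"
  obtain k c xs where q: "q = (k, c, xs)" by (cases q)
  show ?thesis using a q by (auto simp: in_L)
next
  fix zs zs' assume a: "v \<in> Field (Lgen a b)" "w \<in> Field (Lgen a b)" "v = Inr zs" "w = Inr zs'"
  have "zs = zs' \<or> (zs, zs') \<in> lenlex less_nat_rel \<or> (zs', zs) \<in> lenlex less_nat_rel" by (rule tot_lenlex)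
  then show ?thesis using a by (auto simp: in_L W_in)
qed


lemma DgF: "y \<in> Dg r e \<Longrightarrow> y \<in> Field r"
  by (rule subsetD[OF Dg_Field])

definition cond :: "'a rel \<Rightarrow> nat \<Rightarrow> 'a \<Rightarrow> 'a \<Rightarrow> bool" where
  "cond r E x g \<longleftrightarrow> g \<in> Dg r (Suc E) \<and> (g, x) \<in> r \<and> (\<forall>h\<in>Dg r (Suc E). \<not> (lt r g h \<and> (h, x) \<in> r))"

definition Sset :: "'a rel \<Rightarrow> nat \<Rightarrow> 'a \<Rightarrow> 'a \<Rightarrow> 'a set" where
  "Sset r E x g = {w \<in> Dg r E. (g, w) \<in> r \<and> lt r w x}"

definition Q :: "'a rel \<Rightarrow> nat \<Rightarrow> nat \<Rightarrow> 'a \<Rightarrow> bool" where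
  "Q r E n x \<longleftrightarrow> (\<exists>g. cond r E x g) \<and> (\<forall>g. cond r E x g \<longrightarrow> card (Sset r E x g) = n)"

lemma Q_unique: "Q r E n x \<Longrightarrow> Q r E n' x \<Longrightarrow> n = n'"
  unfolding Q_def by metis

lemma Q_iso:
  assumes bij: "bij_betw f (Field r) (Field s)"
    and ord: "\<forall>x\<in>Field r. \<forall>y\<in>Field r. (x, y) \<in> r \<longleftrightarrow> (f x, f y) \<in> s"
    and xF: "x \<in> Field r" and Qr: "Q r E n x"
  shows "Q s E n (f x)"
proof -
  have inj: "inj_on f (Field r)" using bij by (simp add: bij_betw_def)
  have DI: "y \<in> Dg r e \<longleftrightarrow> f y \<in> Dg s e" if "y \<in> Field r" for y e
    using Dg_iso[OF bij ord that] .
  have ltI: "lt r a b \<longleftrightarrow> lt s (f a) (f b)" if "a \<in> Field r" "b \<in> Field r" for a b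
  proof -
    have "(a, b) \<in> r \<longleftrightarrow> (f a, f b) \<in> s" using ord that by blast
    moreover have "a \<noteq> b \<longleftrightarrow> f a \<noteq> f b" using inj that unfolding inj_on_def by blast
    ultimately show ?thesis by (simp add: lt_def)
  qed
  have surj: "\<exists>y\<in>Field r. y' = f y" if "y' \<in> Field s" for y'
    using bij that unfolding bij_betw_def by blast
  have DF: "y \<in> Field r" if "y \<in> Dg r e" for y e using that by (rule DgF)
  have DF': "y \<in> Field s" if "y \<in> Dg s e" for y e using that by (rule DgF)
  have condI: "cond r E x g \<longleftrightarrow> cond s E (f x) (f g)" if gF: "g \<in> Field r" for g
  proof -
    have "(\<forall>h\<in>Dg r (Suc E). \<not> (lt r g h \<and> (h, x) \<in> r)) \<longleftrightarrow>
          (\<forall>h\<in>Dg s (Suc E). \<not> (lt s (f g) h \<and> (h, f x) \<in> s))"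
    proof
      assume A: "\<forall>h\<in>Dg r (Suc E). \<not> (lt r g h \<and> (h, x) \<in> r)"
      show "\<forall>h\<in>Dg s (Suc E). \<not> (lt s (f g) h \<and> (h, f x) \<in> s)"
      proof
        fix h' assume h': "h' \<in> Dg s (Suc E)"
        then obtain h where h: "h \<in> Field r" "h' = f h" using surj DF' by blast
        then have "h \<in> Dg r (Suc E)" using DI h' by simp
        then show "\<not> (lt s (f g) h' \<and> (h', f x) \<in> s)" using A h ltI[OF gF h(1)] ord xF by auto
      qed
    next
      assume A: "\<forall>h\<in>Dg s (Suc E). \<not> (lt s (f g) h \<and> (h, f x) \<in> s)"
      show "\<forall>h\<in>Dg r (Suc E). \<not> (lt r g h \<and> (h, x) \<in> r)"
      proof
        fix h assume h: "h \<in> Dg r (Suc E)"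
        then have hF: "h \<in> Field r" by (rule DF)
        have "f h \<in> Dg s (Suc E)" using DI[OF hF] h by simp
        then show "\<not> (lt r g h \<and> (h, x) \<in> r)" using A hF ltI[OF gF hF] ord xF by auto
      qed
    qed
    moreover have "g \<in> Dg r (Suc E) \<longleftrightarrow> f g \<in> Dg s (Suc E)" using DI[OF gF] .
    moreover have "(g, x) \<in> r \<longleftrightarrow> (f g, f x) \<in> s" using ord gF xF by blast
    ultimately show ?thesis unfolding cond_def by blast
  qed
  have SI: "Sset s E (f x) (f g) = f ` Sset r E x g" if gF: "g \<in> Field r" for g
  proof
    show "Sset s E (f x) (f g) \<subseteq> f ` Sset r E x g"
    proof
      fix w' assume w': "w' \<in> Sset s E (f x) (f g)"
      then have "w' \<in> Field s" unfolding Sset_def using DF' by blast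
      then obtain w where w: "w \<in> Field r" "w' = f w" using surj by blast
      have "w \<in> Sset r E x g" using w' w DI[OF w(1)] ltI[OF w(1) xF] ord gF unfolding Sset_def by auto
      then show "w' \<in> f ` Sset r E x g" using w by blast
    qed
    show "f ` Sset r E x g \<subseteq> Sset s E (f x) (f g)"
    proof
      fix w' assume "w' \<in> f ` Sset r E x g"
      then obtain w where w: "w \<in> Sset r E x g" "w' = f w" by blast
      then have wF: "w \<in> Field r" unfolding Sset_def using DF by blast
      show "w' \<in> Sset s E (f x) (f g)" using w wF DI[OF wF] ltI[OF wF xF] ord gF unfolding Sset_def by auto
    qed
  qed
  obtain g where g: "cond r E x g" using Qr unfolding Q_def by blast
  have gF: "g \<in> Field r" using g unfolding cond_def using DF by blast
  have "cond s E (f x) (f g)" using condI[OF gF] g by simp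
  moreover have "card (Sset s E (f x) g') = n" if g': "cond s E (f x) g'" for g'
  proof -
    have "g' \<in> Field s" using g' unfolding cond_def using DF' by blast
    then obtain g0 where g0: "g0 \<in> Field r" "g' = f g0" using surj by blast
    have c0: "cond r E x g0" using condI[OF g0(1)] g' g0 by simp
    have "Sset r E x g0 \<subseteq> Field r" unfolding Sset_def using DF by blast
    then have "inj_on f (Sset r E x g0)" using inj inj_on_subset by blast
    then have "card (Sset s E (f x) g') = card (Sset r E x g0)" using SI[OF g0(1)] g0 card_image by simp
    then show ?thesis using Qr c0 unfolding Q_def by simp
  qed
  ultimately show ?thesis unfolding Q_def by blast
qed

definition RP :: "(int \<Rightarrow> bool) \<Rightarrow> int rel" where
  "RP P = {(i, j). P i \<and> P j \<and> i \<le> j}"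

lemma in_RP [simp]: "(i, j) \<in> RP P \<longleftrightarrow> P i \<and> P j \<and> i \<le> j"
  by (simp add: RP_def)

lemma Field_RP [simp]: "Field (RP P) = {i. P i}"
  by (auto simp: Field_def RP_def)

lemma anti_RP: "\<forall>i j. (i, j) \<in> RP P \<longrightarrow> (j, i) \<in> RP P \<longrightarrow> i = j"
  by auto

definition a_of :: "int \<Rightarrow> nat" where "a_of j = (if 0 \<le> j then 0 else nat (- j))"
definition b_of :: "int \<Rightarrow> nat" where "b_of j = (if 0 \<le> j then nat j else 0)"

lemma L_eq: "L j = Lgen (a_of j) (b_of j)"
  by (simp add: L_def a_of_def b_of_def)

lemma count_eq: "a_of j + k + 1 = nat (int (b_of j + k) - j + 1)"
proof -
  have "int (a_of j + k + 1) = int (b_of j + k) - j + 1" by (auto simp: a_of_def b_of_def)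
  then show ?thesis by (metis nat_int)
qed

abbreviation JJ :: "(int \<Rightarrow> bool) \<Rightarrow> (int \<times> (nat \<times> nat \<times> nat list + nat list)) rel" where
  "JJ P \<equiv> osum (RP P) L"

lemma Field_J: "Field (JJ P) = {(j, u). P j \<and> u \<in> Field (L j)}"
  by (simp add: Field_osum)

lemma D_J: "P j \<Longrightarrow> u \<in> Field (L j) \<Longrightarrow> (j, u) \<in> Dg (JJ P) e \<longleftrightarrow> u \<in> Dg (L j) e"
proof -
  assume j: "P j" and u: "u \<in> Field (L j)"
  obtain x0 where "lt (L j) x0 u" using L_nomin u unfolding L_eq by blast
  then show ?thesis using Dg_osum_nonmin[OF anti_RP, of j P L x0 u e] j by simp
qed

lemma tot_J: "x \<in> Field (JJ P) \<Longrightarrow> y \<in> Field (JJ P) \<Longrightarrow> (x, y) \<in> JJ P \<or> (y, x) \<in> JJ P"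
proof -
  assume x: "x \<in> Field (JJ P)" and y: "y \<in> Field (JJ P)"
  obtain i u where xu: "x = (i, u)" "P i" "u \<in> Field (L i)" using x by (auto simp: Field_J)
  obtain j v where yv: "y = (j, v)" "P j" "v \<in> Field (L j)" using y by (auto simp: Field_J)
  show ?thesis
  proof (cases "i = j")
    case True
    then have "(u, v) \<in> L j \<or> (v, u) \<in> L j" using tot_L xu yv unfolding L_eq by blast
    then show ?thesis using xu yv True by (auto simp: in_osum)
  next
    case False
    then show ?thesis using xu yv by (auto simp: in_osum)
  qed
qed

lemma KEY:
  assumes j: "P j" and uF: "u \<in> Field (L j)"
  shows "\<exists>E0. \<forall>E\<ge>E0. Q (JJ P) E (nat (int E - j + 1)) (j, u)"
proof -
  define a where "a = a_of j"
  define b where "b = b_of j"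
  have Lj: "L j = Lgen a b" unfolding a_def b_def by (rule L_eq)
  have uF': "u \<in> Field (Lgen a b)" using uF Lj by simp
  have jF: "j \<in> Field (RP P)" using j by simp
  show ?thesis
  proof (intro exI allI impI)
    fix E assume E: "b + farL u \<le> E"
    define k where "k = E - b"
    have far: "farL u \<le> k" and Ek: "E = b + k" using E unfolding k_def by auto
    have k2: "2 \<le> k" using far by (auto simp: farL_def split: sum.splits)
    let ?J = "JJ P"
    let ?g = "(j, g0 b k)"
    let ?p = "(j, u)"
    have A: "g0 b k \<in> Dg (Lgen a b) (Suc (b + k))" "(g0 b k, u) \<in> Lgen a b" using KL_A[OF uF' far] by auto
    have g0F: "g0 b k \<in> Field (L j)" using DgF[OF A(1)] Lj by simp
    have gD: "?g \<in> Dg ?J (Suc E)" using D_J[of P j, OF j g0F] A(1) Lj Ek by simp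
    have gp: "(?g, ?p) \<in> ?J" using A(2) Lj jF g0F uF by (simp add: in_osum)
    have same: "l = j" if "(?g, (l, v)) \<in> ?J" "((l, v), ?p) \<in> ?J" for l v
      using that by (auto simp: in_osum)
    have cg: "cond ?J E ?p ?g"
      unfolding cond_def
    proof (intro conjI gD gp ballI notI)
      fix h assume hD: "h \<in> Dg ?J (Suc E)" and h: "lt ?J ?g h \<and> (h, ?p) \<in> ?J"
      obtain l v where hv: "h = (l, v)" by (cases h)
      have "l = j" using same[of l v] h hv by (auto simp: lt_def)
      then have lv: "lt (L j) (g0 b k) v" "(v, u) \<in> L j" "v \<in> Field (L j)"
        using h hv by (auto simp: lt_osum in_osum)
      have "v \<in> Dg (L j) (Suc E)" using D_J[of P j, OF j lv(3)] hD hv \<open>l = j\<close> by simp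
      then have "Suc E \<le> dgL b v" using L_D[of v a b] lv(3) Lj by simp
      moreover have "dgL b v \<le> b + k" using KL_B[OF uF' far] lv Lj by simp
      ultimately show False using Ek by simp
    qed
    have gF: "?g \<in> Field ?J" using DgF[OF gD] .
    have uniq: "g' = ?g" if cg': "cond ?J E ?p g'" for g'
    proof (rule ccontr)
      assume ne: "g' \<noteq> ?g"
      have g'D: "g' \<in> Dg ?J (Suc E)" "(g', ?p) \<in> ?J" using cg' unfolding cond_def by auto
      have g'F: "g' \<in> Field ?J" using DgF[OF g'D(1)] .
      from tot_J[OF gF g'F] show False
      proof
        assume "(?g, g') \<in> ?J"
        then have "lt ?J ?g g'" using ne by (simp add: lt_def)
        then show False using cg g'D unfolding cond_def by blast
      next
        assume "(g', ?g) \<in> ?J"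
        then have "lt ?J g' ?g" using ne by (simp add: lt_def)
        then show False using cg' gD gp unfolding cond_def by blast
      qed
    qed
    have SS: "Sset ?J E ?p ?g = Pair j ` {v \<in> Dg (L j) E. (g0 b k, v) \<in> L j \<and> lt (L j) v u}"
    proof
      show "Sset ?J E ?p ?g \<subseteq> Pair j ` {v \<in> Dg (L j) E. (g0 b k, v) \<in> L j \<and> lt (L j) v u}"
      proof
        fix w assume w: "w \<in> Sset ?J E ?p ?g"
        obtain l v where wv: "w = (l, v)" by (cases w)
        have "l = j" using same[of l v] w wv unfolding Sset_def by (auto simp: lt_def)
        then have lv: "(g0 b k, v) \<in> L j" "lt (L j) v u" "v \<in> Field (L j)"
          using w wv unfolding Sset_def by (auto simp: lt_osum in_osum)
        have "v \<in> Dg (L j) E" using D_J[of P j, OF j lv(3)] w wv \<open>l = j\<close> unfolding Sset_def by simp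
        then show "w \<in> Pair j ` {v \<in> Dg (L j) E. (g0 b k, v) \<in> L j \<and> lt (L j) v u}"
          using lv wv \<open>l = j\<close> by blast
      qed
      show "Pair j ` {v \<in> Dg (L j) E. (g0 b k, v) \<in> L j \<and> lt (L j) v u} \<subseteq> Sset ?J E ?p ?g"
      proof
        fix w assume "w \<in> Pair j ` {v \<in> Dg (L j) E. (g0 b k, v) \<in> L j \<and> lt (L j) v u}"
        then obtain v where v: "w = (j, v)" "v \<in> Dg (L j) E" "(g0 b k, v) \<in> L j" "lt (L j) v u" by blast
        have vF: "v \<in> Field (L j)" using DgF[OF v(2)] .
        show "w \<in> Sset ?J E ?p ?g"
          unfolding Sset_def using v vF D_J[of P j, OF j vF] jF g0F uF by (simp add: in_osum lt_osum)
      qed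
    qed
    have "{v \<in> Dg (L j) E. (g0 b k, v) \<in> L j \<and> lt (L j) v u} = S0 a b k"
      using KL_C[OF uF' far] Lj Ek by simp
    moreover have "card (Pair j ` S0 a b k) = card (S0 a b k)"
      by (rule card_image) (simp add: inj_on_def)
    ultimately have "card (Sset ?J E ?p ?g) = a + k + 1"
      using SS card_S0[OF k2, of a b] by simp
    also have "\<dots> = nat (int E - j + 1)" using count_eq[of j k] Ek unfolding a_def b_def by simp
    finally have "card (Sset ?J E ?p ?g) = nat (int E - j + 1)" .
    then show "Q ?J E (nat (int E - j + 1)) ?p"
      unfolding Q_def using cg uniq by blast
  qed
qed

lemma idx_pres:
  assumes bij: "bij_betw f (Field (JJ P1)) (Field (JJ P2))"
    and ord: "\<forall>x\<in>Field (JJ P1). \<forall>y\<in>Field (JJ P1). (x, y) \<in> JJ P1 \<longleftrightarrow> (f x, f y) \<in> JJ P2"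
    and xF: "(j1, u1) \<in> Field (JJ P1)" and fx: "f (j1, u1) = (j2, u2)"
  shows "j1 = j2"
proof -
  have fF: "(j2, u2) \<in> Field (JJ P2)" using bij xF fx unfolding bij_betw_def by force
  have h1: "P1 j1" "u1 \<in> Field (L j1)" using xF by (auto simp: Field_J)
  have h2: "P2 j2" "u2 \<in> Field (L j2)" using fF by (auto simp: Field_J)
  obtain E0 where E0: "\<forall>E\<ge>E0. Q (JJ P1) E (nat (int E - j1 + 1)) (j1, u1)" using KEY[of P1 j1 u1, OF h1] by blast
  obtain E1 where E1: "\<forall>E\<ge>E1. Q (JJ P2) E (nat (int E - j2 + 1)) (j2, u2)" using KEY[of P2 j2 u2, OF h2] by blast
  define E where "E = E0 + E1 + nat \<bar>j1\<bar> + nat \<bar>j2\<bar>"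
  have "E0 \<le> E" "E1 \<le> E" unfolding E_def by auto
  have q1: "Q (JJ P1) E (nat (int E - j1 + 1)) (j1, u1)" using E0 \<open>E0 \<le> E\<close> by blast
  have "Q (JJ P2) E (nat (int E - j1 + 1)) (j2, u2)" using Q_iso[OF bij ord xF q1] fx by simp
  moreover have "Q (JJ P2) E (nat (int E - j2 + 1)) (j2, u2)" using E1 \<open>E1 \<le> E\<close> by blast
  ultimately have "nat (int E - j1 + 1) = nat (int E - j2 + 1)" by (rule Q_unique)
  moreover have "int E \<ge> \<bar>j1\<bar>" "int E \<ge> \<bar>j2\<bar>" unfolding E_def by auto
  ultimately show ?thesis by linarith
qed

lemma I_even_J: "I_even = JJ even" by (simp add: I_even_def RP_def)
lemma I_odd_J: "I_odd = JJ odd" by (simp add: I_odd_def RP_def)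
lemma I_all_J: "I_all = JJ (\<lambda>_. True)" by (simp add: I_all_def RP_def)

lemma base_in: "P j \<Longrightarrow> (j, Inr []) \<in> Field (JJ P)"
  by (simp add: Field_J L_eq)

lemma no_iso:
  assumes "ord_iso (JJ P1) (JJ P2)" "P2 j" "\<forall>i. P1 i \<longrightarrow> i \<noteq> j"
  shows False
proof -
  obtain f where bij: "bij_betw f (Field (JJ P1)) (Field (JJ P2))"
    and ord: "\<forall>x\<in>Field (JJ P1). \<forall>y\<in>Field (JJ P1). (x, y) \<in> JJ P1 \<longleftrightarrow> (f x, f y) \<in> JJ P2"
    using assms(1) unfolding ord_iso_def by blast
  have "(j, Inr []) \<in> Field (JJ P2)" using base_in assms(2) by blast
  then obtain x where x: "x \<in> Field (JJ P1)" "f x = (j, Inr [])" using bij unfolding bij_betw_def by force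
  obtain i u where iu: "x = (i, u)" by (cases x)
  have "P1 i" using x iu by (auto simp: Field_J)
  moreover have "i = j" using idx_pres[OF bij ord, of i u j "Inr []"] x iu by simp
  ultimately show False using assms(3) by blast
qed

theorem mainTheorem5:
  shows "\<not> ord_iso I_even I_odd \<and> \<not> ord_iso I_even I_all \<and> \<not> ord_iso I_odd I_all"
proof (intro conjI notI)
  assume a: "ord_iso I_even I_odd"
  have "ord_iso (JJ even) (JJ odd)" using a by (simp add: I_even_J I_odd_J)
  moreover have "odd (1::int)" by simp
  moreover have "\<forall>i::int. even i \<longrightarrow> i \<noteq> 1" by auto
  ultimately show False by (rule no_iso)
next
  assume a: "ord_iso I_even I_all"
  have "ord_iso (JJ even) (JJ (\<lambda>_. True))" using a by (simp add: I_even_J I_all_J)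
  moreover have "(\<lambda>_. True) (1::int)" by simp
  moreover have "\<forall>i::int. even i \<longrightarrow> i \<noteq> 1" by auto
  ultimately show False by (rule no_iso)
next
  assume a: "ord_iso I_odd I_all"
  have "ord_iso (JJ odd) (JJ (\<lambda>_. True))" using a by (simp add: I_odd_J I_all_J)
  moreover have "(\<lambda>_. True) (0::int)" by simp
  moreover have "\<forall>i::int. odd i \<longrightarrow> i \<noteq> 0" by auto
  ultimately show False by (rule no_iso)
qed


end
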